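(* For every integer $m\ge 1$ and every integer $n$, the signed number of perfect matchings $M(\mathcal G(m,n))$ equals $T(m,n)$, where for $n\ge 1$, $T(m,n)$ is the number of domino tilings of the $m$-by-$n$ rectangle, and for $n\le 0$, $T(m,n)$ is the value obtained by extending the sequence $(T(m,n))_{n\ge1}$ backwards using a linear recurrence with constant coefficients satisfied by it (with nonzero constant coefficient). In particular $M(\mathcal G(m,0))=M(\mathcal G(m,-2))=1$.
   Context: Grid conventions: an $m$-by-$N$ grid has vertices $(i,j)$, $1\le i\le m$ (rows), $1\le j\le N$ (columns); horizontal edges join $(i,j),(i,j+1)$, vertical edges join $(i,j),(i+1,j)$. A signed graph is a graph each of whose edges carries a sign $+1$ or $-1$ (parallel edges allowed). For a signed graph $\mathcal G$, $M(\mathcal G)$ denotes the sum over all perfect matchings of $\mathcal G$ of the product of the signs of the edges in the matching (the empty graph has $M=1$). For $m\ge1$ and $n\ge 1$, $\mathcal G(m,n)$ is the $m$-by-$n$ grid graph with all edges of sign $+1$. For $n\le 0$, $\mathcal G(m,n)$ has the vertex set of the $m$-by-$(2-n)$ grid, all horizontal edges of that grid with sign $+1$, the vertical edges lying in columns $2,3,\dots,1-n$ with sign $-1$, and no vertical edges in columns $1$ and $2-n$. *)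

theory Defs
  imports Complex_Main
begin

text \<open>A signed graph is given by a vertex set V, a set E of edge labels
(so parallel edges are allowed), an endpoint map ends (each edge has a
2-element endpoint set) and a sign map sg with values +1 / -1.\<close>

definition perfect_matchings :: "'a set \<Rightarrow> 'e set \<Rightarrow> ('e \<Rightarrow> 'a set) \<Rightarrow> 'e set set" where
  "perfect_matchings V E ends =
     {F. F \<subseteq> E \<and> (\<forall>e\<in>F. \<forall>e'\<in>F. e \<noteq> e' \<longrightarrow> ends e \<inter> ends e' = {})
         \<and> \<Union>(ends ` F) = V}"

definition signed_matching_sum :: "'a set \<Rightarrow> 'e set \<Rightarrow> ('e \<Rightarrow> 'a set) \<Rightarrow> ('e \<Rightarrow> int) \<Rightarrow> int" where
  "signed_matching_sum V E ends sg = (\<Sum>F\<in>perfect_matchings V E ends. \<Prod>e\<in>F. sg e)"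

type_synonym vtx = "nat \<times> nat"   (* (row, column) *)

definition grid_verts :: "nat \<Rightarrow> nat \<Rightarrow> vtx set" where
  "grid_verts m N = {(i, j). 1 \<le> i \<and> i \<le> m \<and> 1 \<le> j \<and> j \<le> N}"

definition hor_edges :: "nat \<Rightarrow> nat \<Rightarrow> (vtx \<times> vtx) set" where
  "hor_edges m N = {((i, j), (i, j + 1)) | i j. 1 \<le> i \<and> i \<le> m \<and> 1 \<le> j \<and> j + 1 \<le> N}"

definition ver_edges :: "nat \<Rightarrow> nat set \<Rightarrow> (vtx \<times> vtx) set" where
  "ver_edges m C = {((i, j), (i + 1, j)) | i j. 1 \<le> i \<and> i + 1 \<le> m \<and> j \<in> C}"

definition edge_ends :: "vtx \<times> vtx \<Rightarrow> vtx set" where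
  "edge_ends e = {fst e, snd e}"

definition G_cols :: "int \<Rightarrow> nat" where
  "G_cols n = (if n \<ge> 1 then nat n else nat (2 - n))"

definition G_verts :: "nat \<Rightarrow> int \<Rightarrow> vtx set" where
  "G_verts m n = grid_verts m (G_cols n)"

definition G_edges :: "nat \<Rightarrow> int \<Rightarrow> (vtx \<times> vtx) set" where
  "G_edges m n =
     (if n \<ge> 1 then hor_edges m (nat n) \<union> ver_edges m {1..nat n}
      else hor_edges m (nat (2 - n)) \<union> ver_edges m {2..nat (1 - n)})"

definition G_sign :: "nat \<Rightarrow> int \<Rightarrow> vtx \<times> vtx \<Rightarrow> int" where
  "G_sign m n e = (if n \<ge> 1 then 1 else if e \<in> hor_edges m (G_cols n) then 1 else -1)"

definition MG :: "nat \<Rightarrow> int \<Rightarrow> int" where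
  "MG m n = signed_matching_sum (G_verts m n) (G_edges m n) edge_ends (G_sign m n)"

definition dominoes :: "nat \<Rightarrow> nat \<Rightarrow> vtx set set" where
  "dominoes m n = {{(i, j), (i', j')} | i j i' j'.
      (i, j) \<in> grid_verts m n \<and> (i', j') \<in> grid_verts m n \<and>
      ((i' = i \<and> j' = j + 1) \<or> (i' = i + 1 \<and> j' = j))}"

definition domino_tilings :: "nat \<Rightarrow> nat \<Rightarrow> vtx set set set" where
  "domino_tilings m n = {D. D \<subseteq> dominoes m n \<and>
      (\<forall>d\<in>D. \<forall>d'\<in>D. d \<noteq> d' \<longrightarrow> d \<inter> d' = {}) \<and> \<Union>D = grid_verts m n}"

definition T_pos :: "nat \<Rightarrow> int \<Rightarrow> int" where
  "T_pos m n = int (card (domino_tilings m (nat n)))"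

definition lin_rec_on :: "nat \<Rightarrow> (nat \<Rightarrow> real) \<Rightarrow> int set \<Rightarrow> (int \<Rightarrow> real) \<Rightarrow> bool" where
  "lin_rec_on d c K a \<longleftrightarrow>
     (\<forall>k\<in>K. a (k + int d) = (\<Sum>i<d. c i * a (k + int i)))"

definition admissible_rec :: "nat \<Rightarrow> (nat \<Rightarrow> real) \<Rightarrow> bool" where
  "admissible_rec d c \<longleftrightarrow> d \<ge> 1 \<and> c 0 \<noteq> 0"

end

theory Submission
  imports Defs
begin


definition St :: "nat \<Rightarrow> nat set set" where "St m = Pow {1..m}"
definition til :: "nat set \<Rightarrow> nat set set" where
  "til X = {P. P \<union> Suc ` P = X \<and> P \<inter> Suc ` P = {}}"
definition wt :: "nat \<Rightarrow> real \<Rightarrow> bool \<Rightarrow> nat set \<Rightarrow> nat set \<Rightarrow> real" where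
  "wt m s b S T = (if S \<in> St m \<and> T \<in> St m \<and> S \<inter> T = {}
     then (\<Sum>P\<in>{P\<in>til ({1..m} - S - T). b \<or> P = {}}. s ^ card P) else 0)"
definition sgv :: "real \<Rightarrow> vtx \<times> vtx \<Rightarrow> real" where
  "sgv s e = (if snd (fst e) = snd (snd e) then s else 1)"
definition Qs :: "nat \<Rightarrow> nat set \<Rightarrow> nat \<Rightarrow> nat set \<Rightarrow> (vtx \<times> vtx) set set" where
  "Qs m C N S = {F. F \<subseteq> hor_edges m (Suc N) \<union> ver_edges m (C \<inter> {1..N}) \<and>
      (\<forall>e\<in>F. \<forall>e'\<in>F. e \<noteq> e' \<longrightarrow> edge_ends e \<inter> edge_ends e' = {}) \<and>
      \<Union>(edge_ends ` F) = grid_verts m N \<union> {(i, Suc N) | i. i \<in> S}}"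
definition WQ :: "nat \<Rightarrow> nat set \<Rightarrow> real \<Rightarrow> nat \<Rightarrow> nat set \<Rightarrow> real" where
  "WQ m C s N S = (\<Sum>F\<in>Qs m C N S. \<Prod>e\<in>F. sgv s e)"

definition VE :: "nat \<Rightarrow> nat set \<Rightarrow> (vtx \<times> vtx) set" where
  "VE N P = {((i, Suc N), (Suc i, Suc N)) | i. i \<in> P}"
definition HE :: "nat \<Rightarrow> nat set \<Rightarrow> (vtx \<times> vtx) set" where
  "HE N S = {((i, Suc N), (i, Suc (Suc N))) | i. i \<in> S}"

lemma fin_hor: "finite (hor_edges m N)"
proof -
  have "hor_edges m N \<subseteq> (\<lambda>(i,j). ((i,j),(i,j+1))) ` ({1..m}\<times>{1..N})"
    unfolding hor_edges_def by auto
  then show ?thesis by (rule finite_subset) auto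
qed

lemma fin_ver: "finite C \<Longrightarrow> finite (ver_edges m C)"
proof -
  assume "finite C"
  have "ver_edges m C \<subseteq> (\<lambda>(i,j). ((i,j),(i+1,j))) ` ({1..m}\<times>C)"
    unfolding ver_edges_def by auto
  then show ?thesis by (rule finite_subset) (use \<open>finite C\<close> in auto)
qed

lemma fin_Qs: "finite (Qs m C N S)"
proof -
  have "Qs m C N S \<subseteq> Pow (hor_edges m (Suc N) \<union> ver_edges m (C \<inter> {1..N}))"
    unfolding Qs_def by auto
  moreover have "finite (hor_edges m (Suc N) \<union> ver_edges m (C \<inter> {1..N}))"
    using fin_hor fin_ver by auto
  ultimately show ?thesis by (meson finite_Pow_iff finite_subset)
qed

lemma fin_til: "finite X \<Longrightarrow> finite (til X)"
proof -
  assume "finite X"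
  have "til X \<subseteq> Pow X" unfolding til_def by auto
  then show ?thesis using \<open>finite X\<close> by (meson finite_Pow_iff finite_subset)
qed

lemma edge_cases:
  assumes "e \<in> hor_edges m (Suc N) \<union> ver_edges m (C \<inter> {1..N})"
  obtains i j where "e = ((i,j),(i,Suc j))" "1 \<le> i" "i \<le> m" "1 \<le> j" "j \<le> N"
  | i j where "e = ((i,j),(Suc i,j))" "1 \<le> i" "Suc i \<le> m" "j \<in> C" "1 \<le> j" "j \<le> N"
  using assms unfolding hor_edges_def ver_edges_def by auto


definition pd :: "(vtx \<times> vtx) set \<Rightarrow> bool" where
  "pd F \<longleftrightarrow> (\<forall>e\<in>F. \<forall>e'\<in>F. e \<noteq> e' \<longrightarrow> edge_ends e \<inter> edge_ends e' = {})"

definition cov :: "(vtx \<times> vtx) set \<Rightarrow> vtx set" where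
  "cov F = \<Union>(edge_ends ` F)"

lemma Qs_alt: "Qs m C N S = {F. F \<subseteq> hor_edges m (Suc N) \<union> ver_edges m (C \<inter> {1..N}) \<and>
      pd F \<and> cov F = grid_verts m N \<union> {(i, Suc N) | i. i \<in> S}}"
  unfolding Qs_def pd_def cov_def by simp

lemma pd_union: "pd F \<Longrightarrow> pd G \<Longrightarrow> cov F \<inter> cov G = {} \<Longrightarrow> pd (F \<union> G)"
  unfolding pd_def cov_def by blast

lemma cov_union: "cov (F \<union> G) = cov F \<union> cov G" unfolding cov_def by auto

lemma cov_VE: "cov (VE N P) = {(i, Suc N) | i. i \<in> P \<union> Suc ` P}"
  unfolding cov_def VE_def edge_ends_def by auto

lemma cov_HE: "cov (HE N S) = {(i, Suc N) | i. i \<in> S} \<union> {(i, Suc (Suc N)) | i. i \<in> S}"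
  unfolding cov_def HE_def edge_ends_def by auto

lemma pd_HE: "pd (HE N S)"
  unfolding pd_def HE_def edge_ends_def by auto

lemma pd_VE: assumes "P \<inter> Suc ` P = {}" shows "pd (VE N P)"
  unfolding pd_def VE_def edge_ends_def
  using assms by auto

lemma Qs_edge:
  assumes "F \<in> Qs m C N S" "e \<in> F"
  shows "snd (fst e) \<le> N \<and> 1 \<le> snd (fst e) \<and> snd (snd e) \<le> Suc N \<and> fst (fst e) \<ge> 1 \<and> fst (snd e) \<le> m"
  using assms unfolding Qs_def hor_edges_def ver_edges_def by auto

lemma cov_mem: "e \<in> F \<Longrightarrow> fst e \<in> cov F \<and> snd e \<in> cov F"
  unfolding cov_def edge_ends_def by auto

lemma Phi_in:
  assumes S: "S \<in> St m" and S': "S' \<in> St m" and dj: "S \<inter> S' = {}"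
    and F0: "F0 \<in> Qs m C N S" and P: "P \<in> til ({1..m} - S - S')" and b: "Suc N \<in> C \<or> P = {}"
  shows "F0 \<union> VE N P \<union> HE N S' \<in> Qs m C (Suc N) S'"
proof -
  have F0e: "F0 \<subseteq> hor_edges m (Suc N) \<union> ver_edges m (C \<inter> {1..N})"
    and F0p: "pd F0" and F0c: "cov F0 = grid_verts m N \<union> {(i, Suc N) | i. i \<in> S}"
    using F0 unfolding Qs_alt by auto
  have PU: "P \<union> Suc ` P = {1..m} - S - S'" and PI: "P \<inter> Suc ` P = {}"
    using P unfolding til_def by auto
  have e1: "F0 \<union> VE N P \<union> HE N S' \<subseteq> hor_edges m (Suc (Suc N)) \<union> ver_edges m (C \<inter> {1..Suc N})"
  proof -
    have "F0 \<subseteq> hor_edges m (Suc (Suc N)) \<union> ver_edges m (C \<inter> {1..Suc N})"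
      using F0e unfolding hor_edges_def ver_edges_def by fastforce
    moreover have "VE N P \<subseteq> ver_edges m (C \<inter> {1..Suc N})"
    proof
      fix e assume "e \<in> VE N P"
      then obtain i where e: "e = ((i, Suc N), (Suc i, Suc N))" "i \<in> P" unfolding VE_def by auto
      then have "i \<in> {1..m}" "Suc i \<in> {1..m}" "Suc N \<in> C" using PU b by auto
      then show "e \<in> ver_edges m (C \<inter> {1..Suc N})" unfolding ver_edges_def e by auto
    qed
    moreover have "HE N S' \<subseteq> hor_edges m (Suc (Suc N))"
      using S' unfolding HE_def hor_edges_def St_def by auto
    ultimately show ?thesis by blast
  qed
  have c: "cov (F0 \<union> VE N P \<union> HE N S') = grid_verts m (Suc N) \<union> {(i, Suc (Suc N)) | i. i \<in> S'}"
    unfolding cov_union F0c cov_VE cov_HE PU using S S' unfolding St_def grid_verts_def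
    by auto
  have p: "pd (F0 \<union> VE N P \<union> HE N S')"
  proof (rule pd_union[OF pd_union[OF F0p pd_VE[OF PI]] pd_HE])
    show "cov F0 \<inter> cov (VE N P) = {}"
      unfolding F0c cov_VE PU grid_verts_def by auto
    show "cov (F0 \<union> VE N P) \<inter> cov (HE N S') = {}"
      unfolding cov_union F0c cov_VE PU cov_HE grid_verts_def using dj by auto
  qed
  show ?thesis unfolding Qs_alt using e1 c p by blast
qed


lemma pd_D: "pd F \<Longrightarrow> e \<in> F \<Longrightarrow> e' \<in> F \<Longrightarrow> x \<in> edge_ends e \<Longrightarrow> x \<in> edge_ends e' \<Longrightarrow> e = e'"
  unfolding pd_def by blast

lemma cov_iff: "x \<in> cov F \<longleftrightarrow> (\<exists>e\<in>F. x = fst e \<or> x = snd e)"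
  unfolding cov_def edge_ends_def by auto

lemma Phi_surj:
  assumes S': "S' \<in> St m" and F: "F \<in> Qs m C (Suc N) S'"
  defines "F0 \<equiv> {e\<in>F. snd (fst e) \<le> N}"
    and "P \<equiv> {i. ((i, Suc N), (Suc i, Suc N)) \<in> F}"
    and "S \<equiv> {i. (i, Suc N) \<in> cov {e\<in>F. snd (fst e) \<le> N}}"
  shows "S \<in> St m \<and> S \<inter> S' = {} \<and> F0 \<in> Qs m C N S \<and> P \<in> til ({1..m} - S - S')
      \<and> (Suc N \<in> C \<or> P = {}) \<and> F = F0 \<union> VE N P \<union> HE N S'"
proof -
  have S_eq: "S = {i. (i, Suc N) \<in> cov F0}" unfolding S_def F0_def by simp
  have Fe: "F \<subseteq> hor_edges m (Suc (Suc N)) \<union> ver_edges m (C \<inter> {1..Suc N})"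
    and Fp: "pd F" and Fc: "cov F = grid_verts m (Suc N) \<union> {(i, Suc (Suc N)) | i. i \<in> S'}"
    using F unfolding Qs_alt by auto
  have HEF: "HE N S' \<subseteq> F"
  proof
    fix e assume "e \<in> HE N S'"
    then obtain i where e: "e = ((i, Suc N), (i, Suc (Suc N)))" "i \<in> S'" unfolding HE_def by auto
    then have "(i, Suc (Suc N)) \<in> cov F" using Fc by auto
    then obtain e' where e': "e' \<in> F" "(i, Suc (Suc N)) = fst e' \<or> (i, Suc (Suc N)) = snd e'"
      unfolding cov_iff by auto
    from e'(1) Fe have "e' \<in> hor_edges m (Suc (Suc N)) \<union> ver_edges m (C \<inter> {1..Suc N})" by auto
    then show "e \<in> F"
    proof (cases rule: edge_cases)
      case (1 i' j) then show ?thesis using e' e by auto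
    next
      case (2 i' j) then show ?thesis using e' e by auto
    qed
  qed
  have VEF: "VE N P \<subseteq> F" unfolding VE_def P_def by auto
  have Fsplit: "F = F0 \<union> VE N P \<union> HE N S'"
  proof
    show "F \<subseteq> F0 \<union> VE N P \<union> HE N S'"
    proof
      fix e assume eF: "e \<in> F"
      show "e \<in> F0 \<union> VE N P \<union> HE N S'"
      proof (cases "snd (fst e) \<le> N")
        case True then show ?thesis using eF unfolding F0_def by auto
      next
        case False
        from eF Fe have "e \<in> hor_edges m (Suc (Suc N)) \<union> ver_edges m (C \<inter> {1..Suc N})" by auto
        then show ?thesis
        proof (cases rule: edge_cases)
          case (1 i j)
          then have j: "j = Suc N" using False by auto
          have "(i, Suc (Suc N)) \<in> cov F" using cov_mem[OF eF] 1 j by auto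
          then have "i \<in> S'" unfolding Fc grid_verts_def by auto
          then show ?thesis unfolding HE_def using 1 j by auto
        next
          case (2 i j)
          then have j: "j = Suc N" using False by auto
          then show ?thesis unfolding VE_def P_def using 2 eF by auto
        qed
      qed
    qed
  qed (use HEF VEF F0_def in auto)
  have F0e: "F0 \<subseteq> hor_edges m (Suc N) \<union> ver_edges m (C \<inter> {1..N})"
  proof
    fix e assume "e \<in> F0"
    then have eF: "e \<in> F" and le: "snd (fst e) \<le> N" unfolding F0_def by auto
    from eF Fe have "e \<in> hor_edges m (Suc (Suc N)) \<union> ver_edges m (C \<inter> {1..Suc N})" by auto
    then show "e \<in> hor_edges m (Suc N) \<union> ver_edges m (C \<inter> {1..N})"
    proof (cases rule: edge_cases)
      case (1 i j) then show ?thesis using le unfolding hor_edges_def by auto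
    next
      case (2 i j) then show ?thesis using le unfolding ver_edges_def by auto
    qed
  qed
  have F0p: "pd F0" using Fp unfolding pd_def F0_def by auto
  have colle: "snd (fst e) \<le> snd (snd e)" if "e \<in> F" for e
  proof -
    from that Fe have "e \<in> hor_edges m (Suc (Suc N)) \<union> ver_edges m (C \<inter> {1..Suc N})" by auto
    then show ?thesis by (cases rule: edge_cases) auto
  qed
  have F0c: "cov F0 = grid_verts m N \<union> {(i, Suc N) | i. i \<in> S}"
  proof
    show "cov F0 \<subseteq> grid_verts m N \<union> {(i, Suc N) | i. i \<in> S}"
    proof
      fix x assume x: "x \<in> cov F0"
      then obtain e where e: "e \<in> F0" "x = fst e \<or> x = snd e" unfolding cov_iff by auto
      have eF: "e \<in> F" using e unfolding F0_def by auto
      have "x \<in> cov F" using cov_mem[OF eF] e by auto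
      then have xg: "x \<in> grid_verts m (Suc N) \<union> {(i, Suc (Suc N)) | i. i \<in> S'}" using Fc by simp
      have "snd x \<le> Suc N" using F0e e unfolding hor_edges_def ver_edges_def by auto
      then have "x \<in> grid_verts m (Suc N)" using xg by auto
      then show "x \<in> grid_verts m N \<union> {(i, Suc N) | i. i \<in> S}"
        using x unfolding grid_verts_def S_eq by (cases x) (auto simp: le_Suc_eq)
    qed
    show "grid_verts m N \<union> {(i, Suc N) | i. i \<in> S} \<subseteq> cov F0"
    proof
      fix x assume x: "x \<in> grid_verts m N \<union> {(i, Suc N) | i. i \<in> S}"
      show "x \<in> cov F0"
      proof (cases "x \<in> grid_verts m N")
        case True
        then have "x \<in> cov F" unfolding Fc grid_verts_def by auto
        then obtain e where e: "e \<in> F" "x = fst e \<or> x = snd e" unfolding cov_iff by auto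
        have "snd x \<le> N" using True unfolding grid_verts_def by auto
        then have "snd (fst e) \<le> N" using e colle[OF e(1)] by auto
        then have "e \<in> F0" unfolding F0_def using e by auto
        then show ?thesis using e cov_mem by blast
      next
        case False then show ?thesis using x unfolding S_eq by auto
      qed
    qed
  qed
  have F0Q: "F0 \<in> Qs m C N S" unfolding Qs_alt using F0e F0p F0c by auto
  have SSt: "S \<in> St m"
  proof -
    have "S \<subseteq> {1..m}"
    proof
      fix i assume "i \<in> S"
      then have "(i, Suc N) \<in> cov F0" unfolding S_eq by auto
      then obtain e where e: "e \<in> F0" "(i, Suc N) = fst e \<or> (i, Suc N) = snd e" unfolding cov_iff by auto
      then show "i \<in> {1..m}" using F0e unfolding hor_edges_def ver_edges_def by auto
    qed
    then show ?thesis unfolding St_def by auto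
  qed
  have inS: "\<exists>e\<in>F0. (i, Suc N) = fst e \<or> (i, Suc N) = snd e" if "i \<in> S" for i
    using that unfolding S_eq cov_iff by auto
  have dj: "S \<inter> S' = {}"
  proof (rule ccontr)
    assume "S \<inter> S' \<noteq> {}"
    then obtain i where i: "i \<in> S" "i \<in> S'" by auto
    obtain e where e: "e \<in> F0" "(i, Suc N) = fst e \<or> (i, Suc N) = snd e" using inS[OF i(1)] by auto
    have h: "((i, Suc N), (i, Suc (Suc N))) \<in> F" using HEF i(2) unfolding HE_def by auto
    have "e = ((i, Suc N), (i, Suc (Suc N)))"
      by (rule pd_D[OF Fp _ h, of _ "(i, Suc N)"]) (use e F0_def edge_ends_def in auto)
    then show False using e unfolding F0_def by auto
  qed
  have PI: "P \<inter> Suc ` P = {}"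
  proof (rule ccontr)
    assume "P \<inter> Suc ` P \<noteq> {}"
    then obtain i where i: "i \<in> P" "Suc i \<in> P" by auto
    have h1: "((i, Suc N), (Suc i, Suc N)) \<in> F" and h2: "((Suc i, Suc N), (Suc (Suc i), Suc N)) \<in> F"
      using i unfolding P_def by auto
    have "((i, Suc N), (Suc i, Suc N)) = ((Suc i, Suc N), (Suc (Suc i), Suc N))"
      by (rule pd_D[OF Fp h1 h2, of "(Suc i, Suc N)"]) (auto simp: edge_ends_def)
    then show False by auto
  qed
  have PU: "P \<union> Suc ` P = {1..m} - S - S'"
  proof
    show "P \<union> Suc ` P \<subseteq> {1..m} - S - S'"
    proof
      fix k assume k: "k \<in> P \<union> Suc ` P"
      then obtain i where i: "i \<in> P" "k = i \<or> k = Suc i" by auto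
      have h: "((i, Suc N), (Suc i, Suc N)) \<in> F" using i unfolding P_def by auto
      have "(k, Suc N) \<in> cov F" using cov_mem[OF h] i by auto
      then have k1: "k \<in> {1..m}" unfolding Fc grid_verts_def by auto
      have k2: "k \<notin> S"
      proof
        assume "k \<in> S"
        then obtain e where e: "e \<in> F0" "(k, Suc N) = fst e \<or> (k, Suc N) = snd e" using inS by blast
        have "e = ((i, Suc N), (Suc i, Suc N))"
          by (rule pd_D[OF Fp _ h, of _ "(k, Suc N)"]) (use e i F0_def edge_ends_def in auto)
        then show False using e unfolding F0_def by auto
      qed
      have k3: "k \<notin> S'"
      proof
        assume "k \<in> S'"
        then have h2: "((k, Suc N), (k, Suc (Suc N))) \<in> F" using HEF unfolding HE_def by auto
        have "((k, Suc N), (k, Suc (Suc N))) = ((i, Suc N), (Suc i, Suc N))"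
          using pd_D[OF Fp h2 h, of "(k, Suc N)"] i(2) by (auto simp: edge_ends_def)
        then show False by auto
      qed
      show "k \<in> {1..m} - S - S'" using k1 k2 k3 by auto
    qed
    show "{1..m} - S - S' \<subseteq> P \<union> Suc ` P"
    proof
      fix k assume k: "k \<in> {1..m} - S - S'"
      then have "(k, Suc N) \<in> cov F" unfolding Fc grid_verts_def by auto
      then obtain e where e: "e \<in> F" "(k, Suc N) = fst e \<or> (k, Suc N) = snd e" by (meson cov_iff)
      have "e \<notin> F0"
      proof
        assume "e \<in> F0"
        then have "(k, Suc N) \<in> cov F0" using cov_mem[of e F0] e(2) by metis
        then show False using k unfolding S_eq by auto
      qed
      then have "e \<in> VE N P \<or> e \<in> HE N S'" using Fsplit e(1) by blast
      then show "k \<in> P \<union> Suc ` P"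
      proof
        assume "e \<in> VE N P" then show ?thesis using e unfolding VE_def by auto
      next
        assume "e \<in> HE N S'" then show ?thesis using e k unfolding HE_def by auto
      qed
    qed
  qed
  have b: "Suc N \<in> C \<or> P = {}"
  proof (cases "P = {}")
    case False
    then obtain i where "i \<in> P" by auto
    then have "((i, Suc N), (Suc i, Suc N)) \<in> F" unfolding P_def by auto
    then have "((i, Suc N), (Suc i, Suc N)) \<in> ver_edges m (C \<inter> {1..Suc N})"
      using Fe unfolding hor_edges_def by auto
    then show ?thesis unfolding ver_edges_def by auto
  qed simp
  show ?thesis using SSt dj F0Q PU PI b Fsplit unfolding til_def by auto
qed


lemma Qs_cov_S:
  assumes "F0 \<in> Qs m C N S" shows "S = {i. (i, Suc N) \<in> cov F0}"
  using assms unfolding Qs_alt grid_verts_def by auto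

lemma Qs_fst_le: "F0 \<in> Qs m C N S \<Longrightarrow> e \<in> F0 \<Longrightarrow> snd (fst e) \<le> N"
  using Qs_edge by blast

lemma Phi_F0:
  assumes "F0 \<in> Qs m C N S"
  shows "{e \<in> F0 \<union> VE N P \<union> HE N S'. snd (fst e) \<le> N} = F0"
  using Qs_fst_le[OF assms] unfolding VE_def HE_def by auto

lemma Phi_P:
  assumes "F0 \<in> Qs m C N S"
  shows "{i. ((i, Suc N), (Suc i, Suc N)) \<in> F0 \<union> VE N P \<union> HE N S'} = P"
proof -
  have "((i, Suc N), (Suc i, Suc N)) \<notin> F0" for i
    using Qs_fst_le[OF assms, of "((i, Suc N), (Suc i, Suc N))"] by auto
  then show ?thesis unfolding VE_def HE_def by auto
qed

lemma fin_Qs_el: "F0 \<in> Qs m C N S \<Longrightarrow> finite F0"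
proof -
  assume "F0 \<in> Qs m C N S"
  then have "F0 \<subseteq> hor_edges m (Suc N) \<union> ver_edges m (C \<inter> {1..N})" unfolding Qs_def by auto
  moreover have "finite (hor_edges m (Suc N) \<union> ver_edges m (C \<inter> {1..N}))"
    using fin_hor fin_ver by auto
  ultimately show ?thesis by (rule finite_subset)
qed

lemma Phi_inj:
  assumes "F1 \<in> Qs m C N S1" "F2 \<in> Qs m C N S2"
    and "F1 \<union> VE N P1 \<union> HE N S' = F2 \<union> VE N P2 \<union> HE N S'"
  shows "S1 = S2 \<and> F1 = F2 \<and> P1 = P2"
proof -
  have "F1 = F2" using Phi_F0[OF assms(1), of P1 S'] Phi_F0[OF assms(2), of P2 S'] assms(3) by simp
  moreover have "P1 = P2" using Phi_P[OF assms(1), of P1 S'] Phi_P[OF assms(2), of P2 S'] assms(3) by simp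
  moreover have "S1 = S2" using Qs_cov_S[OF assms(1)] Qs_cov_S[OF assms(2)] \<open>F1 = F2\<close> by simp
  ultimately show ?thesis by simp
qed

lemma prod_Phi:
  assumes F0: "F0 \<in> Qs m C N S" and P: "finite P" and S': "finite S'"
  shows "(\<Prod>e\<in>F0 \<union> VE N P \<union> HE N S'. sgv s e) = (\<Prod>e\<in>F0. sgv s e) * s ^ card P"
proof -
  have fF0: "finite F0" using F0 by (rule fin_Qs_el)
  have VEi: "VE N P = (\<lambda>i. ((i, Suc N), (Suc i, Suc N))) ` P" unfolding VE_def by auto
  have fVE: "finite (VE N P)" using P VEi by simp
  have cVE: "card (VE N P) = card P" unfolding VEi by (rule card_image) (auto simp: inj_on_def)
  have fHE: "finite (HE N S')" if "finite S'" using that unfolding HE_def by simp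
  have d1: "F0 \<inter> VE N P = {}" using Qs_fst_le[OF F0] unfolding VE_def by fastforce
  have d2: "(F0 \<union> VE N P) \<inter> HE N S' = {}" using Qs_fst_le[OF F0] unfolding VE_def HE_def by fastforce
  have "(\<Prod>e\<in>VE N P. sgv s e) = (\<Prod>e\<in>VE N P. s)"
    by (rule prod.cong) (auto simp: sgv_def VE_def)
  then have pVE: "(\<Prod>e\<in>VE N P. sgv s e) = s ^ card P"
    using cVE by simp
  have pHE: "(\<Prod>e\<in>HE N S'. sgv s e) = 1"
    by (rule prod.neutral) (auto simp: sgv_def HE_def)
  have True: "finite (HE N S')" using fHE S' by blast
    have "(\<Prod>e\<in>F0 \<union> VE N P \<union> HE N S'. sgv s e) = (\<Prod>e\<in>F0 \<union> VE N P. sgv s e) * (\<Prod>e\<in>HE N S'. sgv s e)"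
      by (rule prod.union_disjoint) (use fF0 fVE True d2 in auto)
    also have "(\<Prod>e\<in>F0 \<union> VE N P. sgv s e) = (\<Prod>e\<in>F0. sgv s e) * (\<Prod>e\<in>VE N P. sgv s e)"
      by (rule prod.union_disjoint) (use fF0 fVE d1 in auto)
    finally show ?thesis using pVE pHE by simp
qed


lemma finite_St: "finite (St m)" unfolding St_def by simp

lemma transfer:
  assumes S': "S' \<in> St m"
  shows "WQ m C s (Suc N) S' = (\<Sum>S\<in>St m. WQ m C s N S * wt m s (Suc N \<in> C) S S')"
proof -
  define b where "b = (Suc N \<in> C)"
  define TP where "TP S = {P \<in> til ({1..m} - S - S'). b \<or> P = {}}" for S
  define D where "D = Sigma (St m) (\<lambda>S. if S \<inter> S' = {} then Qs m C N S \<times> TP S else {})"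
  define \<Phi> where "\<Phi> = (\<lambda>(S :: nat set, F0, P). F0 \<union> VE N P \<union> HE N S')"
  have finTP: "finite (TP S)" for S
  proof -
    have "TP S \<subseteq> til ({1..m} - S - S')" unfolding TP_def by auto
    then show ?thesis using fin_til[of "{1..m} - S - S'"] finite_subset by auto
  qed
  have Dmem: "x \<in> D \<longleftrightarrow> (\<exists>S F0 P. x = (S, F0, P) \<and> S \<in> St m \<and> S \<inter> S' = {} \<and> F0 \<in> Qs m C N S
      \<and> P \<in> til ({1..m} - S - S') \<and> (b \<or> P = {}))" for x
    unfolding D_def TP_def by (cases x) auto
  have bij: "bij_betw \<Phi> D (Qs m C (Suc N) S')"
  proof (rule bij_betw_imageI)
    show "inj_on \<Phi> D"
    proof (rule inj_onI)
      fix x y assume "x \<in> D" "y \<in> D" "\<Phi> x = \<Phi> y"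
      then obtain S1 F1 P1 S2 F2 P2 where x: "x = (S1, F1, P1)" "F1 \<in> Qs m C N S1"
        and y: "y = (S2, F2, P2)" "F2 \<in> Qs m C N S2" unfolding Dmem by blast
      show "x = y" using Phi_inj[OF x(2) y(2)] \<open>\<Phi> x = \<Phi> y\<close> unfolding x y \<Phi>_def by simp
    qed
    show "\<Phi> ` D = Qs m C (Suc N) S'"
    proof
      show "\<Phi> ` D \<subseteq> Qs m C (Suc N) S'"
      proof
        fix F assume "F \<in> \<Phi> ` D"
        then obtain x where x: "x \<in> D" "F = \<Phi> x" by blast
        from x(1) obtain S F0 P where "x = (S, F0, P)" "S \<in> St m" "S \<inter> S' = {}" "F0 \<in> Qs m C N S"
          "P \<in> til ({1..m} - S - S')" "b \<or> P = {}" unfolding Dmem by blast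
        then have "F = F0 \<union> VE N P \<union> HE N S'" "S \<in> St m" "S \<inter> S' = {}" "F0 \<in> Qs m C N S"
          "P \<in> til ({1..m} - S - S')" "b \<or> P = {}" using x(2) unfolding \<Phi>_def by auto
        then show "F \<in> Qs m C (Suc N) S'" using Phi_in[OF _ S'] b_def by blast
      qed
      show "Qs m C (Suc N) S' \<subseteq> \<Phi> ` D"
      proof
        fix F assume F: "F \<in> Qs m C (Suc N) S'"
        note H = Phi_surj[OF S' F]
        define S where "S = {i. (i, Suc N) \<in> cov {e\<in>F. snd (fst e) \<le> N}}"
        define F0 where "F0 = {e\<in>F. snd (fst e) \<le> N}"
        define P where "P = {i. ((i, Suc N), (Suc i, Suc N)) \<in> F}"
        have "(S, F0, P) \<in> D" unfolding Dmem using H b_def unfolding S_def F0_def P_def by blast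
        moreover have "F = \<Phi> (S, F0, P)" using H unfolding \<Phi>_def S_def F0_def P_def by simp
        ultimately show "F \<in> \<Phi> ` D" by blast
      qed
    qed
  qed
  have "WQ m C s (Suc N) S' = (\<Sum>x\<in>D. \<Prod>e\<in>\<Phi> x. sgv s e)"
    unfolding WQ_def using sum.reindex_bij_betw[OF bij, of "\<lambda>F. \<Prod>e\<in>F. sgv s e"] by simp
  also have "\<dots> = (\<Sum>x\<in>D. (\<lambda>(S, F0, P). (\<Prod>e\<in>F0. sgv s e) * s ^ card P) x)"
  proof (rule sum.cong[OF refl])
    fix x assume "x \<in> D"
    then obtain S F0 P where x: "x = (S, F0, P)" "F0 \<in> Qs m C N S" "P \<in> til ({1..m} - S - S')"
      unfolding Dmem by (elim exE conjE) fast
    have "P \<subseteq> {1..m}" using x(3) unfolding til_def by auto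
    then have "finite P" using finite_subset by blast
    moreover have "finite S'" using S' unfolding St_def by (auto intro: finite_subset)
    ultimately show "(\<Prod>e\<in>\<Phi> x. sgv s e) = (\<lambda>(S, F0, P). (\<Prod>e\<in>F0. sgv s e) * s ^ card P) x"
      using prod_Phi[OF x(2)] unfolding x \<Phi>_def by simp
  qed
  also have "\<dots> = (\<Sum>S\<in>St m. \<Sum>y\<in>(if S \<inter> S' = {} then Qs m C N S \<times> TP S else {}).
        (\<lambda>(F0, P). (\<Prod>e\<in>F0. sgv s e) * s ^ card P) y)"
    unfolding D_def by (subst sum.Sigma) (auto simp: finite_St fin_Qs finTP split: prod.splits)
  also have "\<dots> = (\<Sum>S\<in>St m. WQ m C s N S * wt m s b S S')"
  proof (rule sum.cong[OF refl])
    fix S assume S: "S \<in> St m"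
    show "(\<Sum>y\<in>(if S \<inter> S' = {} then Qs m C N S \<times> TP S else {}).
        (\<lambda>(F0, P). (\<Prod>e\<in>F0. sgv s e) * s ^ card P) y) = WQ m C s N S * wt m s b S S'"
    proof (cases "S \<inter> S' = {}")
      case True
      have "(\<Sum>y\<in>Qs m C N S \<times> TP S. (\<lambda>(F0, P). (\<Prod>e\<in>F0. sgv s e) * s ^ card P) y)
          = (\<Sum>F0\<in>Qs m C N S. \<Sum>P\<in>TP S. (\<Prod>e\<in>F0. sgv s e) * s ^ card P)"
        by (rule sum.cartesian_product[symmetric])
      also have "\<dots> = WQ m C s N S * (\<Sum>P\<in>TP S. s ^ card P)"
        unfolding WQ_def by (simp add: sum_product)
      finally show ?thesis using True S S' unfolding wt_def TP_def by simp
    next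
      case False
      then show ?thesis unfolding wt_def by simp
    qed
  qed
  finally show ?thesis unfolding b_def .
qed



lemma alt_sum_Pow:
  assumes "finite P" "P \<noteq> {}"
  shows "(\<Sum>Q\<in>Pow P. (-1::real) ^ card Q) = 0"
proof -
  have "(\<Prod>x\<in>P. (1::real) - 1) = (\<Sum>X\<in>Pow P. (-1) ^ card X * (\<Prod>x\<in>X. 1) * (\<Prod>x\<in>P-X. 1))"
    by (rule prod_diff_conv_sum[OF assms(1)])
  moreover have "(\<Prod>x\<in>P. (1::real) - 1) = 0" using assms by (simp add: card_gt_0_iff)
  ultimately show ?thesis by simp
qed

lemma til_empty_iff: "{} \<in> til X \<longleftrightarrow> X = {}"
  unfolding til_def by auto

lemma til_sub: "P \<in> til X \<Longrightarrow> P \<subseteq> X"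
  unfolding til_def by auto

lemma fin_til_el: "finite X \<Longrightarrow> P \<in> til X \<Longrightarrow> finite P"
  using til_sub finite_subset by blast

definition Am :: "nat \<Rightarrow> nat set \<Rightarrow> nat set \<Rightarrow> real" where
  "Am m = wt m 1 True"
definition Cm :: "nat \<Rightarrow> nat set \<Rightarrow> nat set \<Rightarrow> real" where
  "Cm m = wt m (-1) True"
definition Bm :: "nat \<Rightarrow> nat set \<Rightarrow> nat set \<Rightarrow> real" where
  "Bm m S T = (if S \<in> St m \<and> T \<in> St m then Cm m ({1..m} - S) ({1..m} - T) else 0)"

lemma Am_eq: "S \<in> St m \<Longrightarrow> T \<in> St m \<Longrightarrow>
  Am m S T = (if S \<inter> T = {} then real (card (til ({1..m} - S - T))) else 0)"
  unfolding Am_def wt_def by simp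

lemma Bm_eq: assumes "T \<in> St m" "U \<in> St m"
  shows "Bm m T U = (if {1..m} \<subseteq> T \<union> U then (\<Sum>P\<in>til (T \<inter> U). (-1) ^ card P) else 0)"
proof -
  have "{1..m} - ({1..m} - T) - ({1..m} - U) = T \<inter> U" using assms unfolding St_def by auto
  moreover have "({1..m} - T) \<inter> ({1..m} - U) = {} \<longleftrightarrow> {1..m} \<subseteq> T \<union> U" by auto
  ultimately show ?thesis using assms unfolding Bm_def Cm_def wt_def St_def by auto
qed

lemma AB_entry:
  assumes S: "S \<in> St m" and U: "U \<in> St m"
  shows "(\<Sum>T\<in>St m. Am m S T * Bm m T U) = (if S = U then 1 else 0)"
proof -
  define R where "R = {1..m}"
  have SR: "S \<subseteq> R" and UR: "U \<subseteq> R" using S U unfolding St_def R_def by auto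
  have trm: "Am m S T * Bm m T U = (if S \<inter> T = {} \<and> R \<subseteq> T \<union> U then
      (\<Sum>P1\<in>til (R - S - T). \<Sum>P2\<in>til (T \<inter> U). (-1::real) ^ card P2) else 0)" if T: "T \<in> St m" for T
    using Am_eq[OF S T] Bm_eq[OF T U] unfolding R_def by (simp add: sum_distrib_right sum_distrib_left)
  show ?thesis
  proof (cases "S \<subseteq> U")
    case False
    have "Am m S T * Bm m T U = 0" if T: "T \<in> St m" for T
    proof -
      have nn: "\<not> (S \<inter> T = {} \<and> R \<subseteq> T \<union> U)" using False SR by auto
      show ?thesis by (subst trm[OF T]) (simp only: if_not_P[OF nn])
    qed
    then have "(\<Sum>T\<in>St m. Am m S T * Bm m T U) = 0" by (simp add: sum.neutral)
    then show ?thesis using False by auto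
  next
    case True
    define Dt where "Dt = {(T, P1, P2). T \<in> St m \<and> S \<inter> T = {} \<and> R \<subseteq> T \<union> U \<and> P1 \<in> til (R - S - T) \<and> P2 \<in> til (T \<inter> U)}"
    define Et where "Et = Sigma (til (U - S)) Pow"
    have finSt: "finite (St m)" by (rule finite_St)
    have finR: "finite R" unfolding R_def by simp
    have "(\<Sum>T\<in>St m. Am m S T * Bm m T U) = (\<Sum>T\<in>St m. if S \<inter> T = {} \<and> R \<subseteq> T \<union> U then
      (\<Sum>P1\<in>til (R - S - T). \<Sum>P2\<in>til (T \<inter> U). (-1::real) ^ card P2) else 0)"
      using trm by simp
    also have "\<dots> = (\<Sum>T\<in>{T\<in>St m. S \<inter> T = {} \<and> R \<subseteq> T \<union> U}.
      (\<Sum>P1\<in>til (R - S - T). \<Sum>P2\<in>til (T \<inter> U). (-1::real) ^ card P2))"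
      by (rule sum.inter_filter[OF finSt, symmetric])
    also have "\<dots> = (\<Sum>T\<in>{T\<in>St m. S \<inter> T = {} \<and> R \<subseteq> T \<union> U}.
      \<Sum>y\<in>til (R - S - T) \<times> til (T \<inter> U). (-1::real) ^ card (snd y))"
      by (rule sum.cong[OF refl]) (subst sum.cartesian_product, simp add: split_def)
    also have "\<dots> = (\<Sum>x\<in>Dt. (-1::real) ^ card (snd (snd x)))"
    proof -
      have DtEq: "Dt = Sigma {T\<in>St m. S \<inter> T = {} \<and> R \<subseteq> T \<union> U} (\<lambda>T. til (R - S - T) \<times> til (T \<inter> U))"
        unfolding Dt_def by auto
      have f1: "finite (til (R - S - T))" "finite (til (T \<inter> U))" for T
      proof -
        show "finite (til (R - S - T))" using finR by (intro fin_til) auto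
        have "finite (T \<inter> U)" using finR UR finite_subset by (meson inf_le2 order_trans)
        then show "finite (til (T \<inter> U))" by (rule fin_til)
      qed
      show ?thesis unfolding DtEq
        by (subst sum.Sigma) (auto simp: finSt f1 split_def)
    qed
    also have "\<dots> = (\<Sum>y\<in>Et. (-1::real) ^ card (snd y))"
    proof (rule sum.reindex_bij_witness[of _ "\<lambda>(P, Q). ((R - U) \<union> Q \<union> Suc ` Q, P - Q, Q)"
          "\<lambda>(T, P1, P2). (P1 \<union> P2, P2)"])
      fix x assume "x \<in> Dt"
      then obtain T P1 P2 where x: "x = (T, P1, P2)" and T: "T \<in> St m" and ST: "S \<inter> T = {}"
        and RTU: "R \<subseteq> T \<union> U" and P1: "P1 \<in> til (R - S - T)" and P2: "P2 \<in> til (T \<inter> U)"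
        unfolding Dt_def by auto
      have TR: "T \<subseteq> R" using T unfolding St_def R_def by auto
      have P1u: "P1 \<union> Suc ` P1 = R - S - T" and P1i: "P1 \<inter> Suc ` P1 = {}" using P1 unfolding til_def by auto
      have P2u: "P2 \<union> Suc ` P2 = T \<inter> U" and P2i: "P2 \<inter> Suc ` P2 = {}" using P2 unfolding til_def by auto
      have d12: "(P1 \<union> Suc ` P1) \<inter> (P2 \<union> Suc ` P2) = {}" using P1u P2u by auto
      show "(\<lambda>(P, Q). ((R - U) \<union> Q \<union> Suc ` Q, P - Q, Q)) ((\<lambda>(T, P1, P2). (P1 \<union> P2, P2)) x) = x"
      proof -
        have "(R - U) \<union> P2 \<union> Suc ` P2 = T" using P2u RTU TR by auto
        moreover have "(P1 \<union> P2) - P2 = P1" using d12 by auto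
        ultimately show ?thesis unfolding x by simp
      qed
      show "(\<lambda>(T, P1, P2). (P1 \<union> P2, P2)) x \<in> Et"
      proof -
        have "(P1 \<union> P2) \<union> Suc ` (P1 \<union> P2) = (P1 \<union> Suc ` P1) \<union> (P2 \<union> Suc ` P2)" by auto
        also have "\<dots> = (R - S - T) \<union> (T \<inter> U)" using P1u P2u by simp
        also have "\<dots> = U - S" using RTU ST TR UR SR by auto
        finally have "(P1 \<union> P2) \<union> Suc ` (P1 \<union> P2) = U - S" .
        moreover have "(P1 \<union> P2) \<inter> Suc ` (P1 \<union> P2) = {}"
          using P1i P2i d12 by auto
        ultimately show ?thesis unfolding x Et_def til_def by auto
      qed
      show "(-1::real) ^ card (snd ((\<lambda>(T, P1, P2). (P1 \<union> P2, P2)) x)) = (-1) ^ card (snd (snd x))"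
        unfolding x by simp
    next
      fix y assume "y \<in> Et"
      then obtain P Q where y: "y = (P, Q)" and P: "P \<in> til (U - S)" and Q: "Q \<subseteq> P"
        unfolding Et_def by auto
      have Pu: "P \<union> Suc ` P = U - S" and Pi: "P \<inter> Suc ` P = {}" using P unfolding til_def by auto
      show "(\<lambda>(T, P1, P2). (P1 \<union> P2, P2)) ((\<lambda>(P, Q). ((R - U) \<union> Q \<union> Suc ` Q, P - Q, Q)) y) = y"
        unfolding y using Q by auto
      define T where "T = (R - U) \<union> Q \<union> Suc ` Q"
      have QU: "Q \<union> Suc ` Q \<subseteq> U - S" using Q Pu by auto
      have "T \<in> St m" unfolding T_def St_def R_def using QU UR R_def by auto
      moreover have "S \<inter> T = {}" unfolding T_def using QU True by auto
      moreover have "R \<subseteq> T \<union> U" unfolding T_def by auto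
      moreover have "P - Q \<in> til (R - S - T)"
      proof -
        have "(P - Q) \<union> Suc ` (P - Q) = R - S - T"
        proof
          show "(P - Q) \<union> Suc ` (P - Q) \<subseteq> R - S - T"
            using Pu Pi Q UR unfolding T_def by (auto simp: image_iff)
          show "R - S - T \<subseteq> (P - Q) \<union> Suc ` (P - Q)"
          proof
            fix x assume x: "x \<in> R - S - T"
            then have "x \<in> U - S" unfolding T_def by auto
            then have "x \<in> P \<or> x \<in> Suc ` P" using Pu by auto
            moreover have "x \<notin> Q" "x \<notin> Suc ` Q" using x unfolding T_def by auto
            ultimately show "x \<in> (P - Q) \<union> Suc ` (P - Q)" by auto
          qed
        qed
        moreover have "(P - Q) \<inter> Suc ` (P - Q) = {}" using Pi by auto
        ultimately show ?thesis unfolding til_def by auto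
      qed
      moreover have "Q \<in> til (T \<inter> U)"
      proof -
        have "T \<inter> U = Q \<union> Suc ` Q" unfolding T_def using QU by auto
        moreover have "Q \<inter> Suc ` Q = {}" using Pi Q by auto
        ultimately show ?thesis unfolding til_def by auto
      qed
      ultimately show "(\<lambda>(P, Q). ((R - U) \<union> Q \<union> Suc ` Q, P - Q, Q)) y \<in> Dt"
        unfolding y Dt_def T_def by simp
    qed
    also have "\<dots> = (\<Sum>P\<in>til (U - S). \<Sum>Q\<in>Pow P. (-1::real) ^ card Q)"
    proof -
      have "finite (til (U - S))" using fin_til UR finR finite_subset by (metis finite_Diff)
      moreover have "finite (Pow P)" if "P \<in> til (U - S)" for P
        using that til_sub UR finR finite_subset by (metis Diff_subset finite_Pow_iff order.trans)
      ultimately show ?thesis unfolding Et_def by (simp add: sum.Sigma split_def)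
    qed
    also have "\<dots> = (\<Sum>P\<in>til (U - S). if P = {} then 1 else 0)"
    proof (rule sum.cong[OF refl])
      fix P assume P: "P \<in> til (U - S)"
      have "finite P" using til_sub[OF P] UR finR finite_subset by (metis Diff_subset order.trans)
      then show "(\<Sum>Q\<in>Pow P. (-1::real) ^ card Q) = (if P = {} then 1 else 0)"
        using alt_sum_Pow by auto
    qed
    also have "\<dots> = (if {} \<in> til (U - S) then 1 else 0)"
    proof -
      have "finite (til (U - S))" using fin_til UR finR finite_subset by (metis finite_Diff)
      then show ?thesis by (simp add: sum.delta)
    qed
    also have "\<dots> = (if S = U then 1 else 0)" using True unfolding til_empty_iff by auto
    finally show ?thesis .
  qed
qed



lemma lin_dep:
  fixes v :: "'i \<Rightarrow> 'e \<Rightarrow> real"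
  assumes "finite E" "finite I" "card E < card I"
  shows "\<exists>a. (\<exists>i\<in>I. a i \<noteq> 0) \<and> (\<forall>e\<in>E. (\<Sum>i\<in>I. a i * v i e) = 0)"
  using assms
proof (induction E arbitrary: I v rule: finite_induct)
  case empty
  then have "I \<noteq> {}" by auto
  then show ?case by (intro exI[of _ "\<lambda>_. 1"]) auto
next
  case (insert e0 E)
  show ?case
  proof (cases "\<forall>i\<in>I. v i e0 = 0")
    case True
    have "card E < card I" using insert by simp
    then obtain a where a: "\<exists>i\<in>I. a i \<noteq> 0" "\<forall>e\<in>E. (\<Sum>i\<in>I. a i * v i e) = 0"
      using insert.IH[OF insert.prems(1)] by blast
    then show ?thesis using True by (intro exI[of _ a]) auto
  next
    case False
    then obtain i0 where i0: "i0 \<in> I" "v i0 e0 \<noteq> 0" by auto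
    define I' where "I' = I - {i0}"
    define w where "w i e = v i e - (v i e0 / v i0 e0) * v i0 e" for i e
    have fI': "finite I'" using insert.prems unfolding I'_def by auto
    have cI': "card E < card I'" using insert.prems insert.hyps i0 unfolding I'_def by auto
    obtain a' where a': "\<exists>i\<in>I'. a' i \<noteq> 0" "\<forall>e\<in>E. (\<Sum>i\<in>I'. a' i * w i e) = 0"
      using insert.IH[OF fI' cI'] by blast
    define c where "c = - (\<Sum>k\<in>I'. a' k * v k e0) / v i0 e0"
    define a where "a i = (if i = i0 then c else a' i)" for i
    have split: "(\<Sum>i\<in>I. a i * v i e) = c * v i0 e + (\<Sum>i\<in>I'. a' i * v i e)" for e
    proof -
      have II: "I = insert i0 I'" using i0 unfolding I'_def by auto
      have nI: "i0 \<notin> I'" unfolding I'_def by auto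
      have "(\<Sum>i\<in>I'. a i * v i e) = (\<Sum>i\<in>I'. a' i * v i e)"
        by (rule sum.cong) (auto simp: a_def I'_def)
      moreover have "(\<Sum>i\<in>I. a i * v i e) = a i0 * v i0 e + (\<Sum>i\<in>I'. a i * v i e)"
        unfolding II by (rule sum.insert[OF fI' nI])
      ultimately show ?thesis by (simp add: a_def)
    qed
    have "\<forall>e\<in>insert e0 E. (\<Sum>i\<in>I. a i * v i e) = 0"
    proof
      fix e assume "e \<in> insert e0 E"
      then show "(\<Sum>i\<in>I. a i * v i e) = 0"
      proof
        assume "e = e0"
        then show ?thesis unfolding split c_def using i0 by simp
      next
        assume e: "e \<in> E"
        have "(\<Sum>i\<in>I'. a' i * w i e) = (\<Sum>i\<in>I'. a' i * v i e) - (\<Sum>i\<in>I'. a' i * v i e0) / v i0 e0 * v i0 e"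
          unfolding w_def by (simp add: algebra_simps sum_subtractf sum_distrib_right sum_distrib_left sum_divide_distrib)
        also have "\<dots> = (\<Sum>i\<in>I. a i * v i e)" unfolding split c_def by simp
        finally show ?thesis using a'(2) e by simp
      qed
    qed
    moreover have "\<exists>i\<in>I. a i \<noteq> 0" using a'(1) unfolding a_def I'_def by auto
    ultimately show ?thesis by blast
  qed
qed

definition mm :: "nat \<Rightarrow> (nat set \<Rightarrow> nat set \<Rightarrow> real) \<Rightarrow> (nat set \<Rightarrow> nat set \<Rightarrow> real) \<Rightarrow> nat set \<Rightarrow> nat set \<Rightarrow> real" where
  "mm m X Y = (\<lambda>S U. if S \<in> St m \<and> U \<in> St m then (\<Sum>T\<in>St m. X S T * Y T U) else 0)"
definition idm :: "nat \<Rightarrow> nat set \<Rightarrow> nat set \<Rightarrow> real" where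
  "idm m = (\<lambda>S U. if S \<in> St m \<and> S = U then 1 else 0)"
fun mpow :: "nat \<Rightarrow> (nat set \<Rightarrow> nat set \<Rightarrow> real) \<Rightarrow> nat \<Rightarrow> nat set \<Rightarrow> nat set \<Rightarrow> real" where
  "mpow m X 0 = idm m"
| "mpow m X (Suc k) = mm m (mpow m X k) X"
definition clean :: "nat \<Rightarrow> (nat set \<Rightarrow> nat set \<Rightarrow> real) \<Rightarrow> bool" where
  "clean m X \<longleftrightarrow> (\<forall>S U. S \<notin> St m \<or> U \<notin> St m \<longrightarrow> X S U = 0)"

lemma clean_mm: "clean m (mm m X Y)" unfolding clean_def mm_def by auto
lemma clean_idm: "clean m (idm m)" unfolding clean_def idm_def by auto
lemma clean_mpow: "clean m (mpow m X k)" by (cases k) (auto simp: clean_mm clean_idm)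
lemma clean_wt: "clean m (wt m s b)" unfolding clean_def wt_def by auto
lemma clean_Am: "clean m (Am m)" unfolding Am_def by (rule clean_wt)
lemma clean_Bm: "clean m (Bm m)" unfolding clean_def Bm_def by auto

lemma mm_assoc: "mm m (mm m X Y) Z = mm m X (mm m Y Z)"
proof (intro ext)
  fix S U
  show "mm m (mm m X Y) Z S U = mm m X (mm m Y Z) S U"
  proof (cases "S \<in> St m \<and> U \<in> St m")
    case True
    have "mm m (mm m X Y) Z S U = (\<Sum>T\<in>St m. (\<Sum>V\<in>St m. X S V * Y V T) * Z T U)"
      using True unfolding mm_def by (auto intro!: sum.cong)
    also have "\<dots> = (\<Sum>T\<in>St m. \<Sum>V\<in>St m. X S V * Y V T * Z T U)"
      by (simp add: sum_distrib_right)
    also have "\<dots> = (\<Sum>V\<in>St m. \<Sum>T\<in>St m. X S V * Y V T * Z T U)"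
      by (rule sum.swap)
    also have "\<dots> = (\<Sum>V\<in>St m. X S V * (\<Sum>T\<in>St m. Y V T * Z T U))"
      by (simp add: sum_distrib_left mult.assoc)
    also have "\<dots> = mm m X (mm m Y Z) S U"
      using True unfolding mm_def by (auto intro!: sum.cong)
    finally show ?thesis .
  qed (auto simp: mm_def)
qed

lemma mm_idm_right: "clean m X \<Longrightarrow> mm m X (idm m) = X"
proof (intro ext)
  fix S U assume c: "clean m X"
  show "mm m X (idm m) S U = X S U"
  proof (cases "S \<in> St m \<and> U \<in> St m")
    case True
    have "mm m X (idm m) S U = (\<Sum>T\<in>St m. if T = U then X S T else 0)"
      using True unfolding mm_def idm_def by (auto intro!: sum.cong)
    also have "\<dots> = X S U" using True finite_St by (simp add: sum.delta')
    finally show ?thesis .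
  next
    case False then show ?thesis using c unfolding clean_def mm_def by auto
  qed
qed

lemma mm_idm_left: "clean m X \<Longrightarrow> mm m (idm m) X = X"
proof (intro ext)
  fix S U assume c: "clean m X"
  show "mm m (idm m) X S U = X S U"
  proof (cases "S \<in> St m \<and> U \<in> St m")
    case True
    have "mm m (idm m) X S U = (\<Sum>T\<in>St m. if S = T then X T U else 0)"
      using True unfolding mm_def idm_def by (auto intro!: sum.cong)
    also have "\<dots> = X S U" using True finite_St by (simp add: sum.delta)
    finally show ?thesis .
  next
    case False then show ?thesis using c unfolding clean_def mm_def by auto
  qed
qed

lemma AB: "mm m (Am m) (Bm m) = idm m"
proof (intro ext)
  fix S U
  show "mm m (Am m) (Bm m) S U = idm m S U"
    using AB_entry[of S m U] unfolding mm_def idm_def by auto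
qed

lemma wt_sym: "wt m s b S T = wt m s b T S"
  unfolding wt_def by (simp add: Int_commute Diff_eq Int_ac)

lemma Am_sym: "Am m S T = Am m T S" unfolding Am_def by (rule wt_sym)
lemma Bm_sym: "Bm m S T = Bm m T S" unfolding Bm_def Cm_def using wt_sym by metis

lemma BA: "mm m (Bm m) (Am m) = idm m"
proof (intro ext)
  fix S U
  have "mm m (Bm m) (Am m) S U = mm m (Am m) (Bm m) U S"
    unfolding mm_def by (auto simp: Am_sym Bm_sym mult.commute intro: sum.cong)
  then show "mm m (Bm m) (Am m) S U = idm m S U" unfolding AB idm_def by auto
qed

definition Ap :: "nat \<Rightarrow> int \<Rightarrow> nat set \<Rightarrow> nat set \<Rightarrow> real" where
  "Ap m n = (if n \<ge> 0 then mpow m (Am m) (nat n) else mpow m (Bm m) (nat (- n)))"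

lemma clean_Ap: "clean m (Ap m n)" unfolding Ap_def by (auto simp: clean_mpow)

lemma Ap_succ: "Ap m (n + 1) = mm m (Ap m n) (Am m)"
proof (cases "n \<ge> 0")
  case True
  then have "nat (n + 1) = Suc (nat n)" by simp
  then show ?thesis using True unfolding Ap_def by simp
next
  case False
  define k where "k = nat (- n - 1)"
  have nk: "nat (- n) = Suc k" unfolding k_def using False by simp
  have "mm m (Ap m n) (Am m) = mm m (mm m (mpow m (Bm m) k) (Bm m)) (Am m)"
    unfolding Ap_def using False nk by simp
  also have "\<dots> = mpow m (Bm m) k" by (simp add: mm_assoc BA mm_idm_right clean_mpow)
  also have "\<dots> = Ap m (n + 1)"
  proof (cases "n + 1 = 0")
    case True
    then have "k = 0" unfolding k_def by simp
    then show ?thesis unfolding Ap_def using True by simp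
  next
    case False
    then have "\<not> n + 1 \<ge> 0" "nat (- (n + 1)) = k" using \<open>\<not> n \<ge> 0\<close> unfolding k_def by auto
    then show ?thesis unfolding Ap_def by simp
  qed
  finally show ?thesis by simp
qed

lemma Ap_add: "Ap m (n + int j) = mm m (Ap m n) (mpow m (Am m) j)"
proof (induction j)
  case 0 then show ?case by (simp add: mm_idm_right clean_Ap)
next
  case (Suc j)
  have "Ap m (n + int (Suc j)) = Ap m ((n + int j) + 1)" by (simp add: ac_simps)
  also have "\<dots> = mm m (Ap m (n + int j)) (Am m)" by (rule Ap_succ)
  also have "\<dots> = mm m (Ap m n) (mpow m (Am m) (Suc j))" unfolding Suc by (simp add: mm_assoc)
  finally show ?case .
qed

definition useq :: "nat \<Rightarrow> int \<Rightarrow> real" where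
  "useq m n = Ap m n {} {}"

lemma empty_St: "{} \<in> St m" unfolding St_def by simp

lemma useq_add: "useq m (n + int j) = (\<Sum>S\<in>St m. Ap m n {} S * mpow m (Am m) j S {})"
  unfolding useq_def Ap_add mm_def using empty_St by simp

lemma annihilator:
  "\<exists>q D. q 0 \<noteq> 0 \<and> (\<forall>n. (\<Sum>j\<le>D. q j * useq m (n + int j)) = 0)"
proof -
  define D where "D = card (St m)"
  have "card (St m) < card {..D}" unfolding D_def by simp
  then obtain a where a: "\<exists>i\<in>{..D}. a i \<noteq> 0" "\<forall>S\<in>St m. (\<Sum>j\<in>{..D}. a j * mpow m (Am m) j S {}) = 0"
    using lin_dep[of "St m" "{..D}" "\<lambda>j S. mpow m (Am m) j S {}"] finite_St by blast
  have rec: "(\<Sum>j\<le>D. a j * useq m (n + int j)) = 0" for n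
  proof -
    have "(\<Sum>j\<le>D. a j * useq m (n + int j)) = (\<Sum>j\<le>D. \<Sum>S\<in>St m. a j * (Ap m n {} S * mpow m (Am m) j S {}))"
      unfolding useq_add by (simp add: sum_distrib_left)
    also have "\<dots> = (\<Sum>S\<in>St m. \<Sum>j\<le>D. a j * (Ap m n {} S * mpow m (Am m) j S {}))"
      by (rule sum.swap)
    also have "\<dots> = (\<Sum>S\<in>St m. Ap m n {} S * (\<Sum>j\<le>D. a j * mpow m (Am m) j S {}))"
      by (simp add: sum_distrib_left algebra_simps)
    also have "\<dots> = 0" using a(2) by simp
    finally show ?thesis .
  qed
  define j0 where "j0 = (LEAST j. a j \<noteq> 0)"
  obtain i1 where i1: "i1 \<le> D" "a i1 \<noteq> 0" using a(1) by auto
  have aj0: "a j0 \<noteq> 0" unfolding j0_def by (rule LeastI[of "\<lambda>j. a j \<noteq> 0" i1, OF i1(2)])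
  have low: "a j = 0" if "j < j0" for j using not_less_Least[of j "\<lambda>j. a j \<noteq> 0"] that unfolding j0_def by blast
  have "j0 \<le> i1" unfolding j0_def by (rule Least_le[of "\<lambda>j. a j \<noteq> 0" i1, OF i1(2)])
  then have j0D: "j0 \<le> D" using i1(1) by simp
  define q where "q j = a (j + j0)" for j
  have "(\<Sum>j\<le>D - j0. q j * useq m (n + int j)) = 0" for n
  proof -
    have "(\<Sum>j\<le>D. a j * useq m ((n - int j0) + int j)) = (\<Sum>j\<in>{j0..D}. a j * useq m ((n - int j0) + int j))"
    proof (rule sum.mono_neutral_right)
      show "\<forall>i\<in>{..D} - {j0..D}. a i * useq m (n - int j0 + int i) = 0" using low by auto
    qed auto
    also have "\<dots> = (\<Sum>j\<le>D - j0. q j * useq m (n + int j))"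
    proof (rule sum.reindex_bij_witness[of _ "\<lambda>j. j + j0" "\<lambda>j. j - j0"])
    qed (insert j0D, auto simp: q_def algebra_simps)
    finally show ?thesis using rec[of "n - int j0"] by simp
  qed
  moreover have "q 0 \<noteq> 0" unfolding q_def using aj0 by simp
  ultimately show ?thesis by blast
qed



lemma sum_delta_mult: "finite A \<Longrightarrow> a \<in> A \<Longrightarrow> (\<Sum>T\<in>A. (if T = a then 1 else 0) * f T) = (f a :: real)"
proof -
  assume "finite A" "a \<in> A"
  have "(\<Sum>T\<in>A. (if T = a then 1 else 0) * f T) = (\<Sum>T\<in>A. if a = T then f T else 0)"
    by (rule sum.cong) auto
  then show ?thesis using \<open>finite A\<close> \<open>a \<in> A\<close> by (simp add: sum.delta)
qed

lemma til_empty: "til {} = {{}}" unfolding til_def by auto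

lemma WQ_0: "WQ m C s 0 S = (if S = {} then 1 else 0)"
proof -
  have h1: "hor_edges m (Suc 0) = {}" unfolding hor_edges_def by auto
  have v0: "ver_edges m (C \<inter> {1..0}) = {}" unfolding ver_edges_def by auto
  have g0: "grid_verts m 0 = {}" unfolding grid_verts_def by auto
  have "Qs m C 0 S = (if S = {} then {{}} else {})"
    unfolding Qs_def h1 v0 g0 by auto
  then show ?thesis unfolding WQ_def by simp
qed

lemma pm_eq_Qs:
  assumes "C \<subseteq> {1..N}"
  shows "perfect_matchings (grid_verts m N) (hor_edges m N \<union> ver_edges m C) edge_ends = Qs m C N {}"
proof -
  have CC: "C \<inter> {1..N} = C" using assms by auto
  have "F \<subseteq> hor_edges m N \<union> ver_edges m C"
    if F: "F \<subseteq> hor_edges m (Suc N) \<union> ver_edges m C" and c: "\<Union>(edge_ends ` F) = grid_verts m N" for F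
  proof
    fix e assume e: "e \<in> F"
    then have "e \<in> hor_edges m (Suc N) \<union> ver_edges m C" using F by auto
    then show "e \<in> hor_edges m N \<union> ver_edges m C"
    proof
      assume "e \<in> hor_edges m (Suc N)"
      then obtain i j where ij: "e = ((i, j), (i, Suc j))" "1 \<le> i" "i \<le> m" "1 \<le> j" "j \<le> N"
        unfolding hor_edges_def by auto
      have "(i, Suc j) \<in> edge_ends e" unfolding ij(1) edge_ends_def by simp
      then have "(i, Suc j) \<in> \<Union>(edge_ends ` F)" by (rule UN_I[OF e])
      then have "(i, Suc j) \<in> grid_verts m N" using c by simp
      then have "Suc j \<le> N" unfolding grid_verts_def by auto
      then show ?thesis using ij unfolding hor_edges_def by auto
    qed auto
  qed
  moreover have "hor_edges m N \<subseteq> hor_edges m (Suc N)" unfolding hor_edges_def by auto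
  ultimately show ?thesis unfolding perfect_matchings_def Qs_def CC by auto
qed

lemma St_R: "{1..m} \<in> St m" unfolding St_def by simp

lemma WQ_pos:
  assumes "j \<le> N" "S \<in> St m"
  shows "WQ m {1..N} 1 j S = mpow m (Am m) j {} S"
  using assms
proof (induction j arbitrary: S)
  case 0
  then show ?case by (simp add: WQ_0 idm_def empty_St)
next
  case (Suc j)
  have "WQ m {1..N} 1 (Suc j) S = (\<Sum>T\<in>St m. WQ m {1..N} 1 j T * wt m 1 (Suc j \<in> {1..N}) T S)"
    by (rule transfer[OF Suc.prems(2)])
  also have "\<dots> = (\<Sum>T\<in>St m. mpow m (Am m) j {} T * Am m T S)"
    using Suc by (intro sum.cong) (auto simp: Am_def)
  also have "\<dots> = mpow m (Am m) (Suc j) {} S" using Suc.prems empty_St by (simp add: mm_def)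
  finally show ?case .
qed

lemma wt_False: "wt m s False S T = (if S \<in> St m \<and> T \<in> St m \<and> S \<inter> T = {} \<and> {1..m} - S - T = {} then 1 else 0)"
proof -
  have "{P \<in> til X. False \<or> P = {}} = (if X = {} then {{}} else {})" for X
    using til_empty_iff by auto
  then show ?thesis unfolding wt_def by auto
qed

lemma WQ_neg:
  assumes "j \<le> k" "S \<in> St m"
  shows "WQ m {2..Suc k} (-1) (Suc j) S = mpow m (Cm m) j {1..m} S"
  using assms
proof (induction j arbitrary: S)
  case 0
  have "WQ m {2..Suc k} (-1) (Suc 0) S = (\<Sum>T\<in>St m. WQ m {2..Suc k} (-1) 0 T * wt m (-1) (Suc 0 \<in> {2..Suc k}) T S)"
    by (rule transfer[OF 0(2)])
  also have "\<dots> = wt m (-1) False {} S"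
    unfolding WQ_0 using sum_delta_mult[OF finite_St empty_St, of "\<lambda>T. wt m (-1) False T S" m] by simp
  also have "\<dots> = mpow m (Cm m) 0 {1..m} S"
    using 0(2) St_R empty_St by (auto simp: wt_False idm_def St_def)
  finally show ?case .
next
  case (Suc j)
  have "WQ m {2..Suc k} (-1) (Suc (Suc j)) S = (\<Sum>T\<in>St m. WQ m {2..Suc k} (-1) (Suc j) T * wt m (-1) (Suc (Suc j) \<in> {2..Suc k}) T S)"
    by (rule transfer[OF Suc.prems(2)])
  also have "\<dots> = (\<Sum>T\<in>St m. mpow m (Cm m) j {1..m} T * Cm m T S)"
    using Suc by (intro sum.cong) (auto simp: Cm_def)
  also have "\<dots> = mpow m (Cm m) (Suc j) {1..m} S" using Suc.prems St_R by (simp add: mm_def)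
  finally show ?case .
qed

lemma WQ_neg_final:
  "WQ m {2..Suc k} (-1) (Suc (Suc k)) {} = mpow m (Cm m) k {1..m} {1..m}"
proof -
  have "WQ m {2..Suc k} (-1) (Suc (Suc k)) {} = (\<Sum>T\<in>St m. WQ m {2..Suc k} (-1) (Suc k) T * wt m (-1) (Suc (Suc k) \<in> {2..Suc k}) T {})"
    by (rule transfer[OF empty_St])
  also have "\<dots> = (\<Sum>T\<in>St m. mpow m (Cm m) k {1..m} T * (if T = {1..m} then 1 else 0))"
  proof (rule sum.cong[OF refl])
    fix T assume T: "T \<in> St m"
    have "wt m (-1) (Suc (Suc k) \<in> {2..Suc k}) T {} = (if T = {1..m} then 1 else 0)"
      using T empty_St by (auto simp: wt_False St_def)
    then show "WQ m {2..Suc k} (-1) (Suc k) T * wt m (-1) (Suc (Suc k) \<in> {2..Suc k}) T {} =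
        mpow m (Cm m) k {1..m} T * (if T = {1..m} then 1 else 0)"
      using WQ_neg[OF le_refl T] by simp
  qed
  also have "\<dots> = mpow m (Cm m) k {1..m} {1..m}"
    using sum_delta_mult[OF finite_St St_R, where f = "\<lambda>T. mpow m (Cm m) k {1..m} T"] by (simp add: mult.commute)
  finally show ?thesis .
qed

lemma mpow_B_C:
  assumes "S \<in> St m" "U \<in> St m"
  shows "mpow m (Bm m) j S U = mpow m (Cm m) j ({1..m} - S) ({1..m} - U)"
  using assms
proof (induction j arbitrary: U)
  case 0
  have SU: "S \<subseteq> {1..m}" "U \<subseteq> {1..m}" using 0 unfolding St_def by auto
  have eq: "({1..m} - S = {1..m} - U) = (S = U)" using SU by blast
  show ?case using 0 eq by (simp add: idm_def St_def)
next
  case (Suc j)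
  have RS: "{1..m} - S \<in> St m" "{1..m} - U \<in> St m" unfolding St_def by auto
  have "mpow m (Bm m) (Suc j) S U = (\<Sum>T\<in>St m. mpow m (Bm m) j S T * Bm m T U)"
    using Suc.prems by (simp add: mm_def)
  also have "\<dots> = (\<Sum>T\<in>St m. mpow m (Cm m) j ({1..m} - S) ({1..m} - T) * Cm m ({1..m} - T) ({1..m} - U))"
  proof (rule sum.cong[OF refl])
    fix T assume T: "T \<in> St m"
    have "Bm m T U = Cm m ({1..m} - T) ({1..m} - U)" using T Suc.prems unfolding Bm_def by simp
    then show "mpow m (Bm m) j S T * Bm m T U = mpow m (Cm m) j ({1..m} - S) ({1..m} - T) * Cm m ({1..m} - T) ({1..m} - U)"
      using Suc.IH[OF Suc.prems(1) T] by simp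
  qed
  also have "\<dots> = (\<Sum>T\<in>St m. mpow m (Cm m) j ({1..m} - S) T * Cm m T ({1..m} - U))"
    by (rule sum.reindex_bij_witness[of _ "\<lambda>T. {1..m} - T" "\<lambda>T. {1..m} - T"]) (auto simp: St_def)
  also have "\<dots> = mpow m (Cm m) (Suc j) ({1..m} - S) ({1..m} - U)" using RS by (simp add: mm_def)
  finally show ?case .
qed



lemma useq_0: "useq m 0 = 1" unfolding useq_def Ap_def by (simp add: idm_def empty_St)

lemma MG_pos:
  assumes n: "n \<ge> 1"
  shows "real_of_int (MG m n) = useq m n"
proof -
  define N where "N = nat n"
  have GV: "G_verts m n = grid_verts m N" unfolding G_verts_def G_cols_def N_def using n by simp
  have GE: "G_edges m n = hor_edges m N \<union> ver_edges m {1..N}" unfolding G_edges_def N_def using n by simp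
  have PM: "perfect_matchings (G_verts m n) (G_edges m n) edge_ends = Qs m {1..N} N {}"
    unfolding GV GE by (rule pm_eq_Qs) auto
  have "real_of_int (MG m n) = (\<Sum>F\<in>Qs m {1..N} N {}. \<Prod>e\<in>F. real_of_int (G_sign m n e))"
    unfolding MG_def signed_matching_sum_def PM by simp
  also have "\<dots> = WQ m {1..N} 1 N {}"
    unfolding WQ_def using n by (intro sum.cong prod.cong) (auto simp: G_sign_def sgv_def)
  also have "\<dots> = mpow m (Am m) N {} {}" by (rule WQ_pos) (auto simp: empty_St)
  also have "\<dots> = useq m n" unfolding useq_def Ap_def N_def using n by simp
  finally show ?thesis .
qed

lemma MG_neg:
  assumes n: "n \<le> 0"
  shows "real_of_int (MG m n) = useq m n"
proof -
  define k where "k = nat (- n)"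
  have nk: "n = - int k" unfolding k_def using n by simp
  have c: "G_cols n = Suc (Suc k)" unfolding G_cols_def k_def using n by simp
  have GV: "G_verts m n = grid_verts m (Suc (Suc k))" unfolding G_verts_def c ..
  have c2: "nat (2 - n) = Suc (Suc k)" "nat (1 - n) = Suc k" unfolding k_def using n by auto
  have GE: "G_edges m n = hor_edges m (Suc (Suc k)) \<union> ver_edges m {2..Suc k}"
    unfolding G_edges_def using n c2 by simp
  have PM: "perfect_matchings (G_verts m n) (G_edges m n) edge_ends = Qs m {2..Suc k} (Suc (Suc k)) {}"
    unfolding GV GE by (rule pm_eq_Qs) auto
  have sg: "real_of_int (G_sign m n e) = sgv (-1) e" if "e \<in> G_edges m n" for e
  proof -
    from that have "e \<in> hor_edges m (Suc (Suc k)) \<or> e \<in> ver_edges m {2..Suc k}" unfolding GE by auto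
    then show ?thesis
    proof
      assume "e \<in> hor_edges m (Suc (Suc k))"
      then show ?thesis unfolding G_sign_def sgv_def c using n by (auto simp: hor_edges_def)
    next
      assume v: "e \<in> ver_edges m {2..Suc k}"
      then have "e \<notin> hor_edges m (Suc (Suc k))" unfolding ver_edges_def hor_edges_def by auto
      then show ?thesis using v n unfolding G_sign_def sgv_def c by (auto simp: ver_edges_def)
    qed
  qed
  have "real_of_int (MG m n) = (\<Sum>F\<in>Qs m {2..Suc k} (Suc (Suc k)) {}. \<Prod>e\<in>F. real_of_int (G_sign m n e))"
    unfolding MG_def signed_matching_sum_def PM by simp
  also have "\<dots> = WQ m {2..Suc k} (-1) (Suc (Suc k)) {}"
    unfolding WQ_def
  proof (intro sum.cong prod.cong refl)
    fix F e assume F: "F \<in> Qs m {2..Suc k} (Suc (Suc k)) {}" and e: "e \<in> F"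
    have "F \<in> perfect_matchings (G_verts m n) (G_edges m n) edge_ends" using F PM by simp
    then have "e \<in> G_edges m n" using e unfolding perfect_matchings_def by auto
    then show "real_of_int (G_sign m n e) = sgv (-1) e" by (rule sg)
  qed
  also have "\<dots> = mpow m (Cm m) k {1..m} {1..m}" by (rule WQ_neg_final)
  also have "\<dots> = mpow m (Bm m) k {} {}" using mpow_B_C[OF empty_St empty_St, of m k] by simp
  also have "\<dots> = useq m n"
  proof -
    have "Ap m (- int k) = mpow m (Bm m) k" unfolding Ap_def by (cases "k = 0") simp_all
    then show ?thesis unfolding useq_def nk by simp
  qed
  finally show ?thesis .
qed

lemma MG_real: "real_of_int (MG m n) = useq m n"
  using MG_pos MG_neg by (cases "n \<ge> 1") auto

lemma ends_inj: "inj_on edge_ends (hor_edges m N \<union> ver_edges m C)"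
proof (rule inj_onI)
  fix e e' assume e: "e \<in> hor_edges m N \<union> ver_edges m C" and e': "e' \<in> hor_edges m N \<union> ver_edges m C"
    and eq: "edge_ends e = edge_ends e'"
  have s: "fst (snd x) + snd (snd x) = Suc (fst (fst x) + snd (fst x))" if "x \<in> hor_edges m N \<union> ver_edges m C" for x
    using that unfolding hor_edges_def ver_edges_def by auto
  obtain a b where ab: "e = (a, b)" by (cases e)
  obtain c d where cd: "e' = (c, d)" by (cases e')
  have sab: "fst b + snd b = Suc (fst a + snd a)" using s[OF e] ab by simp
  have scd: "fst d + snd d = Suc (fst c + snd c)" using s[OF e'] cd by simp
  have "{a, b} = {c, d}" using eq ab cd unfolding edge_ends_def by simp
  then have "(a = c \<and> b = d) \<or> (a = d \<and> b = c)" by (simp add: doubleton_eq_iff)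
  then show "e = e'"
  proof
    assume "a = d \<and> b = c"
    then have False using sab scd by simp
    then show ?thesis ..
  qed (simp add: ab cd)
qed

lemma ends_dominoes: "edge_ends ` (hor_edges m N \<union> ver_edges m {1..N}) = dominoes m N"
proof
  show "edge_ends ` (hor_edges m N \<union> ver_edges m {1..N}) \<subseteq> dominoes m N"
  proof
    fix d assume "d \<in> edge_ends ` (hor_edges m N \<union> ver_edges m {1..N})"
    then obtain e where e: "e \<in> hor_edges m N \<union> ver_edges m {1..N}" "d = edge_ends e" by auto
    from e(1) show "d \<in> dominoes m N"
    proof
      assume "e \<in> hor_edges m N"
      then obtain i j where "e = ((i, j), (i, j + 1))" "1 \<le> i" "i \<le> m" "1 \<le> j" "j + 1 \<le> N"
        unfolding hor_edges_def by auto
      then show ?thesis unfolding dominoes_def e(2) edge_ends_def grid_verts_def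
        by (intro CollectI exI[of _ i] exI[of _ j] exI[of _ i] exI[of _ "j+1"]) auto
    next
      assume "e \<in> ver_edges m {1..N}"
      then obtain i j where "e = ((i, j), (i + 1, j))" "1 \<le> i" "i + 1 \<le> m" "j \<in> {1..N}"
        unfolding ver_edges_def by auto
      then show ?thesis unfolding dominoes_def e(2) edge_ends_def grid_verts_def
        by (intro CollectI exI[of _ i] exI[of _ j] exI[of _ "i+1"] exI[of _ "j"]) auto
    qed
  qed
  show "dominoes m N \<subseteq> edge_ends ` (hor_edges m N \<union> ver_edges m {1..N})"
  proof
    fix d assume "d \<in> dominoes m N"
    then obtain i j i' j' where d: "d = {(i, j), (i', j')}" "(i, j) \<in> grid_verts m N" "(i', j') \<in> grid_verts m N"
      "(i' = i \<and> j' = j + 1) \<or> (i' = i + 1 \<and> j' = j)" unfolding dominoes_def by blast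
    from d(4) show "d \<in> edge_ends ` (hor_edges m N \<union> ver_edges m {1..N})"
    proof
      assume h: "i' = i \<and> j' = j + 1"
      have "((i, j), (i', j')) \<in> hor_edges m N" using h d(2,3) unfolding hor_edges_def grid_verts_def by auto
      moreover have "d = edge_ends ((i, j), (i', j'))" unfolding d(1) edge_ends_def by simp
      ultimately show ?thesis by blast
    next
      assume h: "i' = i + 1 \<and> j' = j"
      have "((i, j), (i', j')) \<in> ver_edges m {1..N}" using h d(2,3) unfolding ver_edges_def grid_verts_def by auto
      moreover have "d = edge_ends ((i, j), (i', j'))" unfolding d(1) edge_ends_def by simp
      ultimately show ?thesis by blast
    qed
  qed
qed

lemma card_pm_tilings:
  "card (perfect_matchings (grid_verts m N) (hor_edges m N \<union> ver_edges m {1..N}) edge_ends) = card (domino_tilings m N)"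
proof (rule bij_betw_same_card)
  define E where "E = hor_edges m N \<union> ver_edges m {1..N}"
  have inj: "inj_on edge_ends E" unfolding E_def by (rule ends_inj)
  have dom: "edge_ends ` E = dominoes m N" unfolding E_def by (rule ends_dominoes)
  show "bij_betw (\<lambda>F. edge_ends ` F) (perfect_matchings (grid_verts m N) (hor_edges m N \<union> ver_edges m {1..N}) edge_ends) (domino_tilings m N)"
    unfolding E_def[symmetric]
  proof (rule bij_betw_imageI)
    show "inj_on (\<lambda>F. edge_ends ` F) (perfect_matchings (grid_verts m N) E edge_ends)"
    proof (rule inj_onI)
      fix F G assume F: "F \<in> perfect_matchings (grid_verts m N) E edge_ends"
        and G: "G \<in> perfect_matchings (grid_verts m N) E edge_ends" and eq: "edge_ends ` F = edge_ends ` G"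
      have "F \<subseteq> E" "G \<subseteq> E" using F G unfolding perfect_matchings_def by auto
      then show "F = G" using inj_on_image_eq_iff[OF inj] eq by blast
    qed
    show "(\<lambda>F. edge_ends ` F) ` perfect_matchings (grid_verts m N) E edge_ends = domino_tilings m N"
    proof
      show "(\<lambda>F. edge_ends ` F) ` perfect_matchings (grid_verts m N) E edge_ends \<subseteq> domino_tilings m N"
      proof
        fix D assume "D \<in> (\<lambda>F. edge_ends ` F) ` perfect_matchings (grid_verts m N) E edge_ends"
        then obtain F where F: "F \<in> perfect_matchings (grid_verts m N) E edge_ends" "D = edge_ends ` F" by blast
        have FE: "F \<subseteq> E" and pdF: "\<forall>e\<in>F. \<forall>e'\<in>F. e \<noteq> e' \<longrightarrow> edge_ends e \<inter> edge_ends e' = {}"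
          and cF: "\<Union>(edge_ends ` F) = grid_verts m N"
          using F(1) unfolding perfect_matchings_def by auto
        have "D \<subseteq> dominoes m N" using FE dom F(2) by auto
        moreover have "\<forall>d\<in>D. \<forall>d'\<in>D. d \<noteq> d' \<longrightarrow> d \<inter> d' = {}"
        proof (intro ballI impI)
          fix d d' assume "d \<in> D" "d' \<in> D" "d \<noteq> d'"
          then obtain e e' where ee: "e \<in> F" "e' \<in> F" "d = edge_ends e" "d' = edge_ends e'" using F(2) by blast
          then have "e \<noteq> e'" using \<open>d \<noteq> d'\<close> by auto
          then have "edge_ends e \<inter> edge_ends e' = {}" using pdF ee(1,2) by simp
          then show "d \<inter> d' = {}" using ee(3,4) by simp
        qed
        moreover have "\<Union>D = grid_verts m N" using cF F(2) by simp
        ultimately show "D \<in> domino_tilings m N" unfolding domino_tilings_def by blast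
      qed
      show "domino_tilings m N \<subseteq> (\<lambda>F. edge_ends ` F) ` perfect_matchings (grid_verts m N) E edge_ends"
      proof
        fix D assume D: "D \<in> domino_tilings m N"
        have DD: "D \<subseteq> dominoes m N" and pdD: "\<forall>d\<in>D. \<forall>d'\<in>D. d \<noteq> d' \<longrightarrow> d \<inter> d' = {}"
          and cD: "\<Union>D = grid_verts m N" using D unfolding domino_tilings_def by auto
        define F where "F = {e \<in> E. edge_ends e \<in> D}"
        have img: "edge_ends ` F = D"
        proof
          show "edge_ends ` F \<subseteq> D" unfolding F_def by auto
          show "D \<subseteq> edge_ends ` F"
          proof
            fix d assume dD: "d \<in> D"
            then have "d \<in> edge_ends ` E" using DD dom by auto
            then obtain e where "e \<in> E" "d = edge_ends e" by (auto simp only: image_iff)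
            then show "d \<in> edge_ends ` F" using dD unfolding F_def by auto
          qed
        qed
        have "F \<subseteq> E" unfolding F_def by auto
        moreover have "\<forall>e\<in>F. \<forall>e'\<in>F. e \<noteq> e' \<longrightarrow> edge_ends e \<inter> edge_ends e' = {}"
        proof (intro ballI impI)
          fix e e' assume "e \<in> F" "e' \<in> F" "e \<noteq> e'"
          then have "edge_ends e \<noteq> edge_ends e'" "edge_ends e \<in> D" "edge_ends e' \<in> D"
            using inj unfolding F_def inj_on_def by auto
          then show "edge_ends e \<inter> edge_ends e' = {}" using pdD[rule_format, of "edge_ends e" "edge_ends e'"] by simp
        qed
        moreover have "\<Union>(edge_ends ` F) = grid_verts m N" using img cD by simp
        ultimately have "F \<in> perfect_matchings (grid_verts m N) E edge_ends" unfolding perfect_matchings_def by blast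
        then show "D \<in> (\<lambda>F. edge_ends ` F) ` perfect_matchings (grid_verts m N) E edge_ends" using img by blast
      qed
    qed
  qed
qed

lemma MG_T:
  assumes n: "n \<ge> 1"
  shows "MG m n = T_pos m n"
proof -
  define N where "N = nat n"
  have GV: "G_verts m n = grid_verts m N" unfolding G_verts_def G_cols_def N_def using n by simp
  have GE: "G_edges m n = hor_edges m N \<union> ver_edges m {1..N}" unfolding G_edges_def N_def using n by simp
  have "MG m n = (\<Sum>F\<in>perfect_matchings (grid_verts m N) (hor_edges m N \<union> ver_edges m {1..N}) edge_ends. 1)"
    unfolding MG_def signed_matching_sum_def GV GE using n by (intro sum.cong) (auto simp: G_sign_def)
  also have "\<dots> = int (card (domino_tilings m N))" using card_pm_tilings by simp
  finally show ?thesis unfolding T_pos_def N_def .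
qed

lemma BW:
  fixes h :: "int \<Rightarrow> real"
  assumes p0: "p 0 \<noteq> 0" and rec: "\<And>n. (\<Sum>j\<le>D. p j * h (n + int j)) = 0"
    and pos: "\<And>n. n \<ge> 1 \<Longrightarrow> h n = 0"
  shows "h n = 0"
proof -
  have "\<forall>n. n \<ge> 1 - int t \<longrightarrow> h n = 0" for t
  proof (induction t)
    case 0 then show ?case using pos by simp
  next
    case (Suc t)
    show ?case
    proof (intro allI impI)
      fix n assume n: "n \<ge> 1 - int (Suc t)"
      show "h n = 0"
      proof (cases "n \<ge> 1 - int t")
        case True then show ?thesis using Suc.IH by simp
      next
        case False
        have "(\<Sum>j\<le>D. p j * h (n + int j)) = p 0 * h n + (\<Sum>j\<in>{1..D}. p j * h (n + int j))"
        proof -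
          have "{..D} = insert 0 {1..D}" by auto
          then show ?thesis by simp
        qed
        moreover have "(\<Sum>j\<in>{1..D}. p j * h (n + int j)) = 0"
        proof (intro sum.neutral ballI)
          fix j assume "j \<in> {1..D}"
          then have "n + int j \<ge> 1 - int t" using n by auto
          then show "p j * h (n + int j) = 0" using Suc.IH by simp
        qed
        ultimately have "p 0 * h n = 0" using rec[of n] by simp
        then show ?thesis using p0 by simp
      qed
    qed
  qed
  then have A: "\<forall>n'. n' \<ge> 1 - int (nat (1 - n)) \<longrightarrow> h n' = 0" .
  have "n \<ge> 1 - int (nat (1 - n))" by simp
  then show ?thesis using A by blast
qed



lemma B0: assumes T: "T \<in> St m" shows "Bm m {} T = (if T = {1..m} then 1 else 0)"
proof -
  have TR: "T \<subseteq> {1..m}" using T unfolding St_def by auto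
  have "Bm m {} T = wt m (-1) True {1..m} ({1..m} - T)" unfolding Bm_def Cm_def using T empty_St by simp
  also have "\<dots> = (if T = {1..m} then 1 else 0)"
  proof (cases "T = {1..m}")
    case True
    then show ?thesis unfolding wt_def using St_R empty_St by (simp add: til_empty)
  next
    case False
    then have "{1..m} \<inter> ({1..m} - T) \<noteq> {}" using TR by auto
    then show ?thesis unfolding wt_def using False by simp
  qed
  finally show ?thesis .
qed

lemma useq_m2: "useq m (-2) = 1"
proof -
  have "Ap m (-2) = mpow m (Bm m) 2" unfolding Ap_def by simp
  also have "\<dots> = mm m (Bm m) (Bm m)" by (simp add: numeral_2_eq_2 mm_idm_left clean_Bm)
  finally have "useq m (-2) = (\<Sum>T\<in>St m. Bm m {} T * Bm m T {})" unfolding useq_def mm_def using empty_St by simp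
  also have "\<dots> = (\<Sum>T\<in>St m. (if T = {1..m} then 1 else 0) * 1)"
  proof (rule sum.cong[OF refl])
    fix T assume T: "T \<in> St m"
    show "Bm m {} T * Bm m T {} = (if T = {1..m} then 1 else 0) * 1"
      using B0[OF T] Bm_sym[of m T "{}"] by simp
  qed
  also have "\<dots> = 1" using sum_delta_mult[OF finite_St St_R, where f = "\<lambda>_. 1"] by simp
  finally show ?thesis .
qed

theorem mainTheorem2:
  fixes m :: nat
  assumes "m \<ge> 1"
  shows "(\<forall>n::int. n \<ge> 1 \<longrightarrow> MG m n = T_pos m n)
    \<and> (\<exists>d c. admissible_rec d c \<and> lin_rec_on d c {1..} (\<lambda>k. real_of_int (T_pos m k)))
    \<and> (\<forall>d c f. admissible_rec d c
          \<longrightarrow> lin_rec_on d c {1..} (\<lambda>k. real_of_int (T_pos m k))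
          \<longrightarrow> lin_rec_on d c UNIV f
          \<longrightarrow> (\<forall>k\<ge>1. f k = real_of_int (T_pos m k))
          \<longrightarrow> (\<forall>n::int. n \<le> 0 \<longrightarrow> real_of_int (MG m n) = f n))
    \<and> MG m 0 = 1 \<and> MG m (-2) = 1"
proof -
  have P1: "\<forall>n::int. n \<ge> 1 \<longrightarrow> MG m n = T_pos m n" using MG_T by blast
  have Tu: "real_of_int (T_pos m k) = useq m k" if "k \<ge> 1" for k
    using MG_T[OF that, of m] MG_real[of m k] by simp
  obtain q D where q0: "q 0 \<noteq> 0" and qrec: "\<And>n. (\<Sum>j\<le>D. q j * useq m (n + int j)) = 0"
    using annihilator[of m] by blast
  have P2: "\<exists>d c. admissible_rec d c \<and> lin_rec_on d c {1..} (\<lambda>k. real_of_int (T_pos m k))"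
  proof -
    define J where "J = Max {j \<in> {..D}. q j \<noteq> 0}"
    have fin: "finite {j \<in> {..D}. q j \<noteq> 0}" by simp
    have ne: "0 \<in> {j \<in> {..D}. q j \<noteq> 0}" using q0 by simp
    have Jin: "J \<in> {j \<in> {..D}. q j \<noteq> 0}" unfolding J_def using Max_in[OF fin] ne by blast
    then have JD: "J \<le> D" and qJ: "q J \<noteq> 0" by auto
    have above: "q j = 0" if "J < j" "j \<le> D" for j
    proof (rule ccontr)
      assume "q j \<noteq> 0"
      then have "j \<in> {j \<in> {..D}. q j \<noteq> 0}" using that by simp
      then have "j \<le> J" unfolding J_def by (rule Max_ge[OF fin])
      then show False using that by simp
    qed
    have recJ: "(\<Sum>j\<le>J. q j * useq m (n + int j)) = 0" for n
    proof -
      have "(\<Sum>j\<le>J. q j * useq m (n + int j)) = (\<Sum>j\<le>D. q j * useq m (n + int j))"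
        by (rule sum.mono_neutral_left) (use JD above in auto)
      then show ?thesis using qrec by simp
    qed
    have J1: "J \<ge> 1"
    proof (rule ccontr)
      assume "\<not> J \<ge> 1"
      then have "J = 0" by simp
      then have "q 0 * useq m 0 = 0" using recJ[of 0] by simp
      then show False using q0 useq_0 by simp
    qed
    define c where "c i = - q i / q J" for i
    have recu: "useq m (n + int J) = (\<Sum>i<J. c i * useq m (n + int i))" for n
    proof -
      have "{..J} = insert J {..<J}" by auto
      then have "(\<Sum>j\<le>J. q j * useq m (n + int j)) = q J * useq m (n + int J) + (\<Sum>j<J. q j * useq m (n + int j))"
        by simp
      then have "q J * useq m (n + int J) = - (\<Sum>j<J. q j * useq m (n + int j))" using recJ[of n] by simp
      then have "useq m (n + int J) = - (\<Sum>j<J. q j * useq m (n + int j)) / q J" using qJ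
        by (simp add: field_simps)
      also have "\<dots> = (\<Sum>i<J. c i * useq m (n + int i))"
        unfolding c_def by (simp add: sum_divide_distrib sum_negf[symmetric])
      finally show ?thesis .
    qed
    have "admissible_rec J c" unfolding admissible_rec_def c_def using J1 q0 qJ by simp
    moreover have "lin_rec_on J c {1..} (\<lambda>k. real_of_int (T_pos m k))"
      unfolding lin_rec_on_def
    proof
      fix k :: int assume "k \<in> {1..}"
      then have k: "k \<ge> 1" by simp
      have "real_of_int (T_pos m (k + int J)) = useq m (k + int J)" using Tu k by simp
      also have "\<dots> = (\<Sum>i<J. c i * useq m (k + int i))" by (rule recu)
      also have "\<dots> = (\<Sum>i<J. c i * real_of_int (T_pos m (k + int i)))"
        using Tu k by (intro sum.cong) auto
      finally show "real_of_int (T_pos m (k + int J)) = (\<Sum>i<J. c i * real_of_int (T_pos m (k + int i)))" .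
    qed
    ultimately show ?thesis by blast
  qed
  have P3: "\<forall>d c f. admissible_rec d c
          \<longrightarrow> lin_rec_on d c {1..} (\<lambda>k. real_of_int (T_pos m k))
          \<longrightarrow> lin_rec_on d c UNIV f
          \<longrightarrow> (\<forall>k\<ge>1. f k = real_of_int (T_pos m k))
          \<longrightarrow> (\<forall>n::int. n \<le> 0 \<longrightarrow> real_of_int (MG m n) = f n)"
  proof (intro allI impI)
    fix d c f and n :: int
    assume adm: "admissible_rec d c" and rT: "lin_rec_on d c {1..} (\<lambda>k. real_of_int (T_pos m k))"
      and rf: "lin_rec_on d c UNIV f" and fT: "\<forall>k\<ge>1. f k = real_of_int (T_pos m k)" and n: "n \<le> 0"
    have d1: "d \<ge> 1" and c0: "c 0 \<noteq> 0" using adm unfolding admissible_rec_def by auto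
    define w where "w k = useq m (k + int d) - (\<Sum>i<d. c i * useq m (k + int i))" for k
    have wpos: "w k = 0" if "k \<ge> 1" for k
    proof -
      have "real_of_int (T_pos m (k + int d)) = (\<Sum>i<d. c i * real_of_int (T_pos m (k + int i)))"
        using rT that unfolding lin_rec_on_def by auto
      moreover have "real_of_int (T_pos m (k + int d)) = useq m (k + int d)" using Tu that by simp
      moreover have "(\<Sum>i<d. c i * real_of_int (T_pos m (k + int i))) = (\<Sum>i<d. c i * useq m (k + int i))"
        using Tu that by (intro sum.cong) auto
      ultimately show ?thesis unfolding w_def by simp
    qed
    have wrec: "(\<Sum>j\<le>D. q j * w (k + int j)) = 0" for k
    proof -
      have "(\<Sum>j\<le>D. q j * w (k + int j)) = (\<Sum>j\<le>D. q j * useq m ((k + int d) + int j))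
          - (\<Sum>i<d. c i * (\<Sum>j\<le>D. q j * useq m ((k + int i) + int j)))"
        unfolding w_def by (simp add: algebra_simps sum_subtractf sum_distrib_left sum_distrib_right sum.swap[of _ "{..<d}"])
      also have "\<dots> = 0" using qrec by simp
      finally show ?thesis .
    qed
    have w0: "w k = 0" for k by (rule BW[where p = q and D = D and h = w, OF q0 wrec wpos])
    define g where "g k = useq m k - f k" for k
    define p where "p i = (if i = d then 1 else - c i)" for i
    have grec: "(\<Sum>i\<le>d. p i * g (k + int i)) = 0" for k
    proof -
      have "{..d} = insert d {..<d}" by auto
      then have "(\<Sum>i\<le>d. p i * g (k + int i)) = g (k + int d) - (\<Sum>i<d. c i * g (k + int i))"
        unfolding p_def by (simp add: sum_negf)
      also have "\<dots> = w k - (f (k + int d) - (\<Sum>i<d. c i * f (k + int i)))"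
        unfolding g_def w_def by (simp add: algebra_simps sum_subtractf)
      also have "\<dots> = 0" using w0 rf unfolding lin_rec_on_def by simp
      finally show ?thesis .
    qed
    have p0: "p 0 \<noteq> 0" unfolding p_def using d1 c0 by simp
    have gpos: "g k = 0" if "k \<ge> 1" for k using Tu that fT unfolding g_def by simp
    have "g n = 0" by (rule BW[where p = p and D = d and h = g, OF p0 grec gpos])
    then show "real_of_int (MG m n) = f n" using MG_real[of m n] unfolding g_def by simp
  qed
  have P4: "MG m 0 = 1" using MG_real[of m 0] useq_0[of m] by simp
  have P5: "MG m (-2) = 1" using MG_real[of m "-2"] useq_m2[of m] by simp
  show ?thesis using P1 P2 P3 P4 P5 by blast
qed

end
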